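(* Let $\epsilon>0$ and let $u^1,u^2$ be smooth functions on $[0,1]^2$; denote also by $u^1,u^2$ their restrictions to the grid $(x_i,y_j)=(i\Delta x,j\Delta y)$, $i=0,\dots,N-1$, $j=0,\dots,M-1$, $(N-1)\Delta x=(M-1)\Delta y=1$. Let $D_x=P_x^{-1}Q_x$, $D_y=P_y^{-1}Q_y$ be summation-by-parts operators with $P_x=\Delta x\,\mathrm{diag}(p^x_0,\dots,p^x_{N-1})$, $P_y=\Delta y\,\mathrm{diag}(p^y_0,\dots,p^y_{M-1})$, positive entries, $Q_x+Q_x^T=R_N-L_N$, $Q_y+Q_y^T=R_M-L_M$, and $p:=p^x_0=p^x_{N-1}=p^y_0=p^y_{M-1}$; assume moreover that these operators satisfy, for every smooth $\bar u$ with grid restriction $u$ and every grid function $w$, $\|D_x(u\circ w)-u\circ D_xw\|_{P_x}\le C_0\|\partial_x\bar u\|_{L^\infty}\|w\|_{P_x}$ (and analogously in $y$) with $C_0$ independent of the grid. Let $\mathbf V(t)=(V^1(t),V^2(t))$ solve the semi-discrete scheme $$ \mathbf V_t+u^1\circ\mathfrak{d}_x\mathbf V+u^2\circ\mathfrak{d}_y\mathbf V-C\mathbf V+\epsilon\,\mathfrak{curl}^2(\mathbf V)=\mathcal B\mathbf V,\qquad t>0, $$ (i.e. the scheme with homogeneous Dirichlet data $\mathbf g=0$), where $C=\begin{pmatrix}-\mathfrak{d}_yu^2 & \mathfrak{d}_yu^1\\ \mathfrak{d}_xu^2 & -\mathfrak{d}_xu^1\end{pmatrix}$ (entries acting by componentwise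 multiplication) and $$\mathcal B=(P_x^{-1}\otimes I_M)(\Sigma_{\mathcal L}\mathcal L+\Sigma_{\mathcal R}\mathcal R)+(I_N\otimes P_y^{-1})(\Sigma_{\mathcal D}\mathcal D+\Sigma_{\mathcal U}\mathcal U),$$ with diagonal penalty matrices $\Sigma_{\mathcal K}=\Sigma'_{\mathcal K}+\epsilon\Sigma''_{\mathcal K}$ ($\mathcal K\in\{\mathcal L,\mathcal R,\mathcal D,\mathcal U\}$), whose diagonal entries are indexed like grid functions, $(\sigma_{\mathcal K})_{i,j}$. Suppose the penalty parameters satisfy $$(\sigma'_{\mathcal R})_{N-1,j}\le \tfrac{u^{1,-}(1,y_j)}{2},\quad (\sigma'_{\mathcal L})_{0,j}\le-\tfrac{u^{1,+}(0,y_j)}{2},\quad (\sigma'_{\mathcal U})_{i,M-1}\le\tfrac{u^{2,-}(x_i,1)}{2},\quad (\sigma'_{\mathcal D})_{i,0}\le-\tfrac{u^{2,+}(x_i,0)}{2},$$ $$\sigma''_{\mathcal R}\le-\tfrac{1}{2p\Delta x},\quad \sigma''_{\mathcal L}\le-\tfrac{1}{2p\Delta x},\quad \sigma''_{\mathcal U}\le-\tfrac{1}{2p\Delta y},\quad \sigma''_{\mathcal D}\le-\tfrac{1}{2p\Delta y},$$ and all other entries are $0$. Then $$\|\mathbf V(t)\|_{\mathbf P}^2\le e^{ct}\|\mathbf V(0)\|_{\mathbf P}^2,$$ where $c$ is a constant depending on $u^1,u^2$ and their derivative approximations but not on $N$ or $M$.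
   Context: $R_n=\mathrm{diag}(0,\dots,0,1)$, $L_n=\mathrm{diag}(1,0,\dots,0)$ ($n\times n$), $I_n$ identity, $\otimes$ Kronecker product. $\mathfrak{d}_x=D_x\otimes I_M$, $\mathfrak{d}_y=I_N\otimes D_y$, $\mathbf P=P_x\otimes P_y$, $\mathcal R=R_N\otimes I_M$, $\mathcal L=L_N\otimes I_M$, $\mathcal U=I_N\otimes R_M$, $\mathcal D=I_N\otimes L_M$. Grid functions are ordered as $(w_{0,0},w_{0,1},\dots,w_{0,M-1},w_{1,0},\dots,w_{N-1,M-1})^T$; $(u\circ w)_k=u_kw_k$; $\|w\|_{P_x}=(w^TP_xw)^{1/2}$. $(v,w)_{\mathbf P}=v^T\mathbf Pw$, and for vector grid functions $(\mathbf V,\mathbf W)_{\mathbf P}=(V^1,W^1)_{\mathbf P}+(V^2,W^2)_{\mathbf P}$, $\|\mathbf V\|_{\mathbf P}=(\mathbf V,\mathbf V)_{\mathbf P}^{1/2}$; operators and $\mathcal B$ act on $\mathbf V$ componentwise. $\mathfrak{curl}^2(\mathbf V)=(-\mathfrak{d}_{yy}V^1+\mathfrak{d}_{xy}V^2,\ \mathfrak{d}_{xy}V^1-\mathfrak{d}_{xx}V^2)$ with $\mathfrak{d}_{xy}=\mathfrak{d}_x\mathfrak{d}_y$, etc. $u^{l,+}=\max(u^l,0)$, $u^{l,-}=\min(u^l,0)$. The $\Sigma''$ conditions are stated for scalar (constant) values $\sigma''_{\mathcal K}$ of the relevant boundary entries. *)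

theory Defs
  imports "HOL-Analysis.Analysis"
begin

fun iter_fderiv :: "'a::real_normed_vector list \<Rightarrow> ('a \<Rightarrow> real) \<Rightarrow> 'a \<Rightarrow> real" where
  "iter_fderiv [] f = f"
| "iter_fderiv (v # vs) f = (\<lambda>z. frechet_derivative (iter_fderiv vs f) (at z) v)"

definition smooth_on_open :: "'a::real_normed_vector set \<Rightarrow> ('a \<Rightarrow> real) \<Rightarrow> bool" where
  "smooth_on_open S f \<longleftrightarrow> open S \<and> (\<forall>vs. \<forall>z\<in>S. iter_fderiv vs f differentiable (at z))"

definition smooth_on_closed :: "'a::real_normed_vector set \<Rightarrow> ('a \<Rightarrow> real) \<Rightarrow> bool" where
  "smooth_on_closed K f \<longleftrightarrow> (\<exists>S. K \<subseteq> S \<and> smooth_on_open S f)"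

definition sup_deriv01 :: "(real \<Rightarrow> real) \<Rightarrow> real" where
  "sup_deriv01 f = Sup ((\<lambda>x. \<bar>deriv f x\<bar>) ` {0..1})"

text \<open>D = P^{-1} Q with P = h diag(p_0,...,p_{n-1}).\<close>
definition sbpD :: "real \<Rightarrow> (nat \<Rightarrow> real) \<Rightarrow> (nat \<Rightarrow> nat \<Rightarrow> real) \<Rightarrow> nat \<Rightarrow> nat \<Rightarrow> real" where
  "sbpD h p Q i k = Q i k / (h * p i)"

definition matvec :: "nat \<Rightarrow> (nat \<Rightarrow> nat \<Rightarrow> real) \<Rightarrow> (nat \<Rightarrow> real) \<Rightarrow> nat \<Rightarrow> real" where
  "matvec n A w = (\<lambda>i. \<Sum>k<n. A i k * w k)"

definition sbp_Q :: "nat \<Rightarrow> (nat \<Rightarrow> nat \<Rightarrow> real) \<Rightarrow> bool" where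
  "sbp_Q n Q \<longleftrightarrow> (\<forall>i<n. \<forall>k<n. Q i k + Q k i =
      (if i = n - 1 \<and> k = n - 1 then 1 else 0) - (if i = 0 \<and> k = 0 then 1 else 0))"

definition normsq1 :: "nat \<Rightarrow> real \<Rightarrow> (nat \<Rightarrow> real) \<Rightarrow> (nat \<Rightarrow> real) \<Rightarrow> real" where
  "normsq1 n h p w = (\<Sum>i<n. h * p i * (w i)\<^sup>2)"

definition commutator_bound :: "nat \<Rightarrow> real \<Rightarrow> (nat \<Rightarrow> real) \<Rightarrow> (nat \<Rightarrow> nat \<Rightarrow> real) \<Rightarrow> real \<Rightarrow> bool" where
  "commutator_bound n h p Q C0 \<longleftrightarrow>
     (\<forall>ub w. smooth_on_closed {0..1} ub \<longrightarrow>
        (let D = sbpD h p Q; u = (\<lambda>i. ub (real i * h)) in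
         sqrt (normsq1 n h p (\<lambda>i. matvec n D (\<lambda>k. u k * w k) i - u i * matvec n D w i))
           \<le> C0 * sup_deriv01 ub * sqrt (normsq1 n h p w)))"

text \<open>Grid functions are w i j with i < N, j < M (entry w_{i,j} of the paper's vector).
  \<open>dX\<close> is D_x \<otimes> I_M and \<open>dY\<close> is I_N \<otimes> D_y written out in indices.\<close>
definition dX :: "nat \<Rightarrow> (nat \<Rightarrow> nat \<Rightarrow> real) \<Rightarrow> (nat \<Rightarrow> nat \<Rightarrow> real) \<Rightarrow> nat \<Rightarrow> nat \<Rightarrow> real" where
  "dX N Dx w = (\<lambda>i j. \<Sum>k<N. Dx i k * w k j)"

definition dY :: "nat \<Rightarrow> (nat \<Rightarrow> nat \<Rightarrow> real) \<Rightarrow> (nat \<Rightarrow> nat \<Rightarrow> real) \<Rightarrow> nat \<Rightarrow> nat \<Rightarrow> real" where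
  "dY M Dy w = (\<lambda>i j. \<Sum>k<M. Dy j k * w i k)"

text \<open>Penalty operator
  B = (P_x^{-1} \<otimes> I)(S_L \<L> + S_R \<R>) + (I \<otimes> P_y^{-1})(S_D \<D> + S_U \<U>),
  with \<L> = L_N \<otimes> I_M etc. and diagonal S_K given by their entries S_K i j.\<close>
definition penB :: "nat \<Rightarrow> nat \<Rightarrow> real \<Rightarrow> real \<Rightarrow> (nat \<Rightarrow> real) \<Rightarrow> (nat \<Rightarrow> real)
   \<Rightarrow> (nat \<Rightarrow> nat \<Rightarrow> real) \<Rightarrow> (nat \<Rightarrow> nat \<Rightarrow> real) \<Rightarrow> (nat \<Rightarrow> nat \<Rightarrow> real) \<Rightarrow> (nat \<Rightarrow> nat \<Rightarrow> real)
   \<Rightarrow> (nat \<Rightarrow> nat \<Rightarrow> real) \<Rightarrow> nat \<Rightarrow> nat \<Rightarrow> real" where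
  "penB N M hx hy px py SL SR SD SU w = (\<lambda>i j.
     (SL i j * (if i = 0 then w i j else 0) + SR i j * (if i = N - 1 then w i j else 0)) / (hx * px i)
   + (SD i j * (if j = 0 then w i j else 0) + SU i j * (if j = M - 1 then w i j else 0)) / (hy * py j))"

definition ipP :: "nat \<Rightarrow> nat \<Rightarrow> real \<Rightarrow> real \<Rightarrow> (nat \<Rightarrow> real) \<Rightarrow> (nat \<Rightarrow> real)
   \<Rightarrow> (nat \<Rightarrow> nat \<Rightarrow> real) \<Rightarrow> (nat \<Rightarrow> nat \<Rightarrow> real) \<Rightarrow> real" where
  "ipP N M hx hy px py v w = (\<Sum>i<N. \<Sum>j<M. hx * px i * hy * py j * v i j * w i j)"

definition normsqP :: "nat \<Rightarrow> nat \<Rightarrow> real \<Rightarrow> real \<Rightarrow> (nat \<Rightarrow> real) \<Rightarrow> (nat \<Rightarrow> real)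
   \<Rightarrow> (nat \<Rightarrow> nat \<Rightarrow> real) \<Rightarrow> (nat \<Rightarrow> nat \<Rightarrow> real) \<Rightarrow> real" where
  "normsqP N M hx hy px py V1 V2 = ipP N M hx hy px py V1 V1 + ipP N M hx hy px py V2 V2"

definition pos_part :: "real \<Rightarrow> real" where "pos_part a = max a 0"
definition neg_part :: "real \<Rightarrow> real" where "neg_part a = min a 0"

end

theory Submission
  imports Defs
begin

lemma slice_iter:
  fixes f :: "'a::real_normed_vector \<Rightarrow> real" and a d :: 'a
  assumes sm: "smooth_on_open S f"
  shows "\<forall>z. a + z *\<^sub>R d \<in> S \<longrightarrow>
     iter_fderiv vs (\<lambda>x. f (a + x *\<^sub>R d)) z = iter_fderiv (map (\<lambda>v. v *\<^sub>R d) vs) f (a + z *\<^sub>R d)"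
proof (induction vs)
  case Nil
  then show ?case by simp
next
  case (Cons v vs)
  show ?case
  proof (intro allI impI)
    fix z assume zS: "a + z *\<^sub>R d \<in> S"
    let ?g = "iter_fderiv (map (\<lambda>v. v *\<^sub>R d) vs) f"
    let ?e = "\<lambda>x::real. a + x *\<^sub>R d"
    have opS: "open S" using sm by (simp add: smooth_on_open_def)
    have gd: "?g differentiable (at (?e z))" using sm zS by (simp add: smooth_on_open_def)
    then have gD: "(?g has_derivative frechet_derivative ?g (at (?e z))) (at (?e z))"
      by (simp add: frechet_derivative_works)
    have eD: "(?e has_derivative (\<lambda>h. h *\<^sub>R d)) (at z)"
      by (auto intro!: derivative_eq_intros)
    have cD: "((?g \<circ> ?e) has_derivative (frechet_derivative ?g (at (?e z)) \<circ> (\<lambda>h. h *\<^sub>R d))) (at z)"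
      using diff_chain_at[OF eD gD] .
    have opS': "open (?e -` S)"
      by (rule continuous_open_vimage[OF opS]) (auto intro!: continuous_intros)
    have eq: "\<And>x. x \<in> ?e -` S \<Longrightarrow> (?g \<circ> ?e) x = iter_fderiv vs (\<lambda>x. f (a + x *\<^sub>R d)) x"
      using Cons.IH by simp
    have "(iter_fderiv vs (\<lambda>x. f (a + x *\<^sub>R d)) has_derivative (frechet_derivative ?g (at (?e z)) \<circ> (\<lambda>h. h *\<^sub>R d))) (at z)"
      by (rule has_derivative_transform_within_open[OF cD opS' _ eq]) (use zS in auto)
    then have "frechet_derivative (iter_fderiv vs (\<lambda>x. f (a + x *\<^sub>R d))) (at z) = (frechet_derivative ?g (at (?e z)) \<circ> (\<lambda>h. h *\<^sub>R d))"
      using frechet_derivative_at by metis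
    then show "iter_fderiv (v # vs) (\<lambda>x. f (a + x *\<^sub>R d)) z = iter_fderiv (map (\<lambda>v. v *\<^sub>R d) (v # vs)) f (a + z *\<^sub>R d)"
      by simp
  qed
qed

lemma slice_smooth_open:
  fixes f :: "'a::real_normed_vector \<Rightarrow> real" and a d :: 'a
  assumes sm: "smooth_on_open S f"
  shows "smooth_on_open ((\<lambda>x. a + x *\<^sub>R d) -` S) (\<lambda>x. f (a + x *\<^sub>R d))"
proof -
  have opS: "open S" using sm by (simp add: smooth_on_open_def)
  have opS': "open ((\<lambda>x. a + x *\<^sub>R d) -` S)"
    by (rule continuous_open_vimage[OF opS]) (auto intro!: continuous_intros)
  have "iter_fderiv vs (\<lambda>x. f (a + x *\<^sub>R d)) differentiable (at z)"
    if zS: "a + z *\<^sub>R d \<in> S" for vs z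
  proof -
    let ?g = "iter_fderiv (map (\<lambda>v. v *\<^sub>R d) vs) f"
    let ?e = "\<lambda>x::real. a + x *\<^sub>R d"
    have gd: "?g differentiable (at (?e z))" using sm zS by (simp add: smooth_on_open_def)
    then have gD: "(?g has_derivative frechet_derivative ?g (at (?e z))) (at (?e z))"
      by (simp add: frechet_derivative_works)
    have eD: "(?e has_derivative (\<lambda>h. h *\<^sub>R d)) (at z)"
      by (auto intro!: derivative_eq_intros)
    have cD: "((?g \<circ> ?e) has_derivative (frechet_derivative ?g (at (?e z)) \<circ> (\<lambda>h. h *\<^sub>R d))) (at z)"
      using diff_chain_at[OF eD gD] .
    have eq: "\<And>x. x \<in> ?e -` S \<Longrightarrow> (?g \<circ> ?e) x = iter_fderiv vs (\<lambda>x. f (a + x *\<^sub>R d)) x"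
      using slice_iter[OF sm, of a d vs] by simp
    have "(iter_fderiv vs (\<lambda>x. f (a + x *\<^sub>R d)) has_derivative (frechet_derivative ?g (at (?e z)) \<circ> (\<lambda>h. h *\<^sub>R d))) (at z)"
      by (rule has_derivative_transform_within_open[OF cD opS' _ eq]) (use zS in auto)
    then show ?thesis by (auto simp: differentiable_def)
  qed
  then show ?thesis using opS' by (auto simp: smooth_on_open_def)
qed

lemma slice_deriv:
  fixes f :: "'a::real_normed_vector \<Rightarrow> real" and a d :: 'a
  assumes sm: "smooth_on_open S f" and xS: "a + x *\<^sub>R d \<in> S"
  shows "deriv (\<lambda>x. f (a + x *\<^sub>R d)) x = iter_fderiv [d] f (a + x *\<^sub>R d)"
proof -
  let ?h = "\<lambda>x. f (a + x *\<^sub>R d)"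
  have s2: "smooth_on_open ((\<lambda>x. a + x *\<^sub>R d) -` S) ?h" by (rule slice_smooth_open[OF sm])
  have "\<forall>vs. \<forall>z\<in>(\<lambda>x. a + x *\<^sub>R d) -` S. iter_fderiv vs ?h differentiable (at z)"
    using s2 unfolding smooth_on_open_def by (rule conjunct2)
  then have "iter_fderiv [] ?h differentiable (at x)" using xS by blast
  then have "?h differentiable (at x)" by (simp only: iter_fderiv.simps)
  then have hD: "(?h has_derivative frechet_derivative ?h (at x)) (at x)"
    by (simp only: frechet_derivative_works)
  have lin: "linear (frechet_derivative ?h (at x))"
    by (rule has_derivative_linear[OF hD])
  have fe: "frechet_derivative ?h (at x) = (\<lambda>t. frechet_derivative ?h (at x) 1 * t)"
  proof
    fix t :: real
    have "frechet_derivative ?h (at x) (t *\<^sub>R 1) = t *\<^sub>R frechet_derivative ?h (at x) 1"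
      by (rule linear_scale[OF lin])
    then show "frechet_derivative ?h (at x) t = frechet_derivative ?h (at x) 1 * t" by simp
  qed
  have "(?h has_real_derivative frechet_derivative ?h (at x) 1) (at x)"
    unfolding has_field_derivative_def using hD fe by metis
  then have "deriv ?h x = frechet_derivative ?h (at x) 1" by (rule DERIV_imp_deriv)
  also have "\<dots> = iter_fderiv [1] ?h x" by simp
  also have "\<dots> = iter_fderiv [d] f (a + x *\<^sub>R d)"
    using slice_iter[OF sm, of a d "[1]"] xS by simp
  finally show ?thesis .
qed

lemma slice_bound:
  fixes f :: "real \<times> real \<Rightarrow> real" and d :: "real \<times> real"
  assumes sm: "smooth_on_closed ({0..1} \<times> {0..1}) f"
  shows "\<exists>L. \<forall>a. (\<forall>x\<in>{0..1}. a + x *\<^sub>R d \<in> {0..1} \<times> {0..1}) \<longrightarrow>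
           smooth_on_closed {0..1} (\<lambda>x. f (a + x *\<^sub>R d)) \<and> \<bar>sup_deriv01 (\<lambda>x. f (a + x *\<^sub>R d))\<bar> \<le> L"
proof -
  obtain S where KS: "{0..1} \<times> {0..1} \<subseteq> S" and smS: "smooth_on_open S f"
    using sm by (auto simp: smooth_on_closed_def)
  let ?K = "{0..1::real} \<times> {0..1::real}"
  have "continuous_on ?K (iter_fderiv [d] f)"
  proof (rule continuous_at_imp_continuous_on, intro ballI)
    fix z assume "z \<in> ?K"
    then have "iter_fderiv [d] f differentiable (at z)" using smS KS unfolding smooth_on_open_def by (metis subsetD)
    then show "isCont (iter_fderiv [d] f) z" by (rule differentiable_imp_continuous_within)
  qed
  moreover have "compact ?K" by (simp add: compact_Times)
  ultimately have "compact (iter_fderiv [d] f ` ?K)" by (rule compact_continuous_image)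
  then obtain L where L: "\<And>z. z \<in> ?K \<Longrightarrow> \<bar>iter_fderiv [d] f z\<bar> \<le> L"
  proof -
    from compact_imp_bounded[OF \<open>compact (iter_fderiv [d] f ` ?K)\<close>]
    obtain B where "\<forall>y\<in>iter_fderiv [d] f ` ?K. norm y \<le> B" unfolding bounded_iff by blast
    then have "\<And>z. z \<in> ?K \<Longrightarrow> \<bar>iter_fderiv [d] f z\<bar> \<le> B" by (metis imageI real_norm_def)
    then show ?thesis by (rule that)
  qed
  show ?thesis
  proof (intro exI[of _ L] allI impI conjI)
    fix a assume A: "\<forall>x\<in>{0..1}. a + x *\<^sub>R d \<in> ?K"
    show "smooth_on_closed {0..1} (\<lambda>x. f (a + x *\<^sub>R d))"
      unfolding smooth_on_closed_def
    proof (rule exI[of _ "(\<lambda>x. a + x *\<^sub>R d) -` S"], rule conjI)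
      show "{0..1} \<subseteq> (\<lambda>x. a + x *\<^sub>R d) -` S" using A KS by auto
      show "smooth_on_open ((\<lambda>x. a + x *\<^sub>R d) -` S) (\<lambda>x. f (a + x *\<^sub>R d))"
        by (rule slice_smooth_open[OF smS])
    qed
    have dv: "\<And>x. x \<in> {0..1} \<Longrightarrow> \<bar>deriv (\<lambda>x. f (a + x *\<^sub>R d)) x\<bar> \<le> L"
    proof -
      fix x :: real assume x: "x \<in> {0..1}"
      have m: "a + x *\<^sub>R d \<in> ?K" by (rule bspec[OF A x])
      have "a + x *\<^sub>R d \<in> S" by (rule subsetD[OF KS m])
      then show "\<bar>deriv (\<lambda>x. f (a + x *\<^sub>R d)) x\<bar> \<le> L"
        by (simp only: slice_deriv[OF smS]) (rule L[OF m])
    qed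
    have ne: "(\<lambda>x. \<bar>deriv (\<lambda>x. f (a + x *\<^sub>R d)) x\<bar>) ` {0..1} \<noteq> {}" by simp
    have le: "sup_deriv01 (\<lambda>x. f (a + x *\<^sub>R d)) \<le> L"
      unfolding sup_deriv01_def apply (rule cSup_least[OF ne]) apply (erule imageE) apply (simp only:) apply (rule dv) apply assumption done
    have bdd: "bdd_above ((\<lambda>x. \<bar>deriv (\<lambda>x. f (a + x *\<^sub>R d)) x\<bar>) ` {0..1})"
      apply (rule bdd_aboveI2[where M=L]) apply (rule dv) apply assumption done
    have "\<bar>deriv (\<lambda>x. f (a + x *\<^sub>R d)) 0\<bar> \<le> sup_deriv01 (\<lambda>x. f (a + x *\<^sub>R d))"
      unfolding sup_deriv01_def apply (rule cSup_upper[OF _ bdd]) apply (rule imageI) apply simp done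
    then have z: "0 \<le> sup_deriv01 (\<lambda>x. f (a + x *\<^sub>R d))" by linarith
    show "\<bar>sup_deriv01 (\<lambda>x. f (a + x *\<^sub>R d))\<bar> \<le> L" by (simp only: abs_of_nonneg[OF z] le)
  qed
qed


definition ipx :: "nat \<Rightarrow> real \<Rightarrow> (nat \<Rightarrow> real) \<Rightarrow> (nat \<Rightarrow> real) \<Rightarrow> (nat \<Rightarrow> real) \<Rightarrow> real" where
  "ipx n h p a b = (\<Sum>i<n. h * p i * a i * b i)"

lemma dd:
  fixes f :: "nat \<Rightarrow> nat \<Rightarrow> real"
  assumes "a < n"
  shows "(\<Sum>i<n. \<Sum>k<n. if i = a \<and> k = a then f i k else 0) = f a a"
proof -
  have "\<And>i. (\<Sum>k<n. if i = a \<and> k = a then f i k else 0) = (if i = a then f i a else 0)"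
    subgoal for i by (cases "i = a") (simp_all add: assms)
    done
  then show ?thesis using assms by simp
qed

lemma sum_two_deltas:
  fixes f :: "nat \<Rightarrow> nat \<Rightarrow> real"
  assumes "n \<ge> 1"
  shows "(\<Sum>i<n. \<Sum>k<n. f i k * ((if i = n - 1 \<and> k = n - 1 then 1 else 0) - (if i = 0 \<and> k = 0 then 1 else 0)))
         = f (n-1) (n-1) - f 0 0"
proof -
  have pw: "\<And>i k. f i k * ((if i = n - 1 \<and> k = n - 1 then 1 else 0) - (if i = 0 \<and> k = 0 then 1 else 0))
     = (if i = n - 1 \<and> k = n - 1 then f i k else 0) - (if i = 0 \<and> k = 0 then f i k else 0)"
    by simp
  have "(\<Sum>i<n. \<Sum>k<n. f i k * ((if i = n - 1 \<and> k = n - 1 then 1 else 0) - (if i = 0 \<and> k = 0 then 1 else 0)))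
     = (\<Sum>i<n. \<Sum>k<n. (if i = n - 1 \<and> k = n - 1 then f i k else 0))
       - (\<Sum>i<n. \<Sum>k<n. (if i = 0 \<and> k = 0 then f i k else 0))"
    unfolding pw by (simp only: sum_subtractf)
  also have "\<dots> = f (n-1) (n-1) - f 0 0" using assms by (simp add: dd)
  finally show ?thesis .
qed

lemma sbp1:
  assumes Q: "sbp_Q n Q" and n: "n \<ge> 1"
  shows "(\<Sum>i<n. a i * (\<Sum>k<n. Q i k * b k)) + (\<Sum>i<n. b i * (\<Sum>k<n. Q i k * a k))
         = a (n-1) * b (n-1) - a 0 * b 0"
proof -
  have e1: "(\<Sum>i<n. a i * (\<Sum>k<n. Q i k * b k)) = (\<Sum>i<n. \<Sum>k<n. a i * b k * Q i k)"
    by (simp add: sum_distrib_left ac_simps)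
  have "(\<Sum>i<n. b i * (\<Sum>k<n. Q i k * a k)) = (\<Sum>i<n. \<Sum>k<n. b i * a k * Q i k)"
    by (simp add: sum_distrib_left ac_simps)
  also have "\<dots> = (\<Sum>k<n. \<Sum>i<n. b i * a k * Q i k)" by (rule sum.swap)
  also have "\<dots> = (\<Sum>i<n. \<Sum>k<n. a i * b k * Q k i)" by (simp add: ac_simps)
  finally have e2: "(\<Sum>i<n. b i * (\<Sum>k<n. Q i k * a k)) = (\<Sum>i<n. \<Sum>k<n. a i * b k * Q k i)" .
  have "(\<Sum>i<n. a i * (\<Sum>k<n. Q i k * b k)) + (\<Sum>i<n. b i * (\<Sum>k<n. Q i k * a k))
      = (\<Sum>i<n. \<Sum>k<n. a i * b k * (Q i k + Q k i))"
    unfolding e1 e2 by (simp add: sum.distrib[symmetric] distrib_left)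
  also have "\<dots> = (\<Sum>i<n. \<Sum>k<n. a i * b k * ((if i = n - 1 \<and> k = n - 1 then 1 else 0) - (if i = 0 \<and> k = 0 then 1 else 0)))"
    using Q unfolding sbp_Q_def by (intro sum.cong refl) auto
  also have "\<dots> = a (n-1) * b (n-1) - a 0 * b 0"
    by (rule sum_two_deltas[OF n, where f="\<lambda>i k. a i * b k"])
  finally show ?thesis .
qed

lemma ipx_D:
  assumes "\<forall>i<n. h * p i \<noteq> 0"
  shows "ipx n h p a (matvec n (sbpD h p Q) b) = (\<Sum>i<n. a i * (\<Sum>k<n. Q i k * b k))"
  unfolding ipx_def matvec_def sbpD_def
proof (intro sum.cong refl)
  fix i assume "i \<in> {..<n}"
  then have nz: "h * p i \<noteq> 0" using assms by auto
  have "h * p i * a i * (\<Sum>k<n. Q i k / (h * p i) * b k) = a i * (\<Sum>k<n. (h * p i) * (Q i k / (h * p i) * b k))"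
    by (simp only: sum_distrib_left[symmetric]) (simp only: ac_simps)
  also have "\<dots> = a i * (\<Sum>k<n. Q i k * b k)"
    by (intro arg_cong[where f="\<lambda>x. a i * x"] sum.cong refl) (use nz in simp)
  finally show "h * p i * a i * (\<Sum>k<n. Q i k / (h * p i) * b k) = a i * (\<Sum>k<n. Q i k * b k)" .
qed

lemma sbp_ip:
  assumes "sbp_Q n Q" "n \<ge> 1" "\<forall>i<n. h * p i \<noteq> 0"
  shows "ipx n h p a (matvec n (sbpD h p Q) b) + ipx n h p b (matvec n (sbpD h p Q) a)
         = a (n-1) * b (n-1) - a 0 * b 0"
  unfolding ipx_D[OF assms(3)] by (rule sbp1[OF assms(1,2)])

lemma ipP_rows: "ipP N M hx hy px py v w = (\<Sum>j<M. hy * py j * ipx N hx px (\<lambda>i. v i j) (\<lambda>i. w i j))"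
  unfolding ipP_def ipx_def
  by (subst sum.swap) (simp add: sum_distrib_left ac_simps)

lemma ipP_cols: "ipP N M hx hy px py v w = (\<Sum>i<N. hx * px i * ipx M hy py (v i) (w i))"
  unfolding ipP_def ipx_def
  by (simp add: sum_distrib_left ac_simps)

lemma dX_mv: "dX N Dx w i j = matvec N Dx (\<lambda>k. w k j) i"
  by (simp add: dX_def matvec_def)
lemma dY_mv: "dY M Dy w i j = matvec M Dy (w i) j"
  by (simp add: dY_def matvec_def)

lemma sbpX:
  assumes "sbp_Q N Q" "N \<ge> 1" "\<forall>i<N. hx * px i \<noteq> 0"
  shows "ipP N M hx hy px py a (dX N (sbpD hx px Q) b) + ipP N M hx hy px py b (dX N (sbpD hx px Q) a)
       = (\<Sum>j<M. hy * py j * (a (N-1) j * b (N-1) j - a 0 j * b 0 j))"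
  unfolding ipP_rows dX_mv sum.distrib[symmetric] distrib_left[symmetric]
  using sbp_ip[OF assms] by simp

lemma sbpY:
  assumes "sbp_Q M Q" "M \<ge> 1" "\<forall>j<M. hy * py j \<noteq> 0"
  shows "ipP N M hx hy px py a (dY M (sbpD hy py Q) b) + ipP N M hx hy px py b (dY M (sbpD hy py Q) a)
       = (\<Sum>i<N. hx * px i * (a i (M-1) * b i (M-1) - a i 0 * b i 0))"
  unfolding ipP_cols dY_mv sum.distrib[symmetric] distrib_left[symmetric]
  using sbp_ip[OF assms] by simp

lemma ipx_nonneg: assumes "\<forall>i<n. h * p i > 0" shows "ipx n h p a a \<ge> 0"
  unfolding ipx_def
proof (intro sum_nonneg)
  fix x assume "x \<in> {..<n}"
  then have "h * p x > 0" using assms by auto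
  then show "0 \<le> h * p x * a x * a x"
    by (metis mult.assoc mult_nonneg_nonneg less_imp_le zero_le_square)
qed

lemma cs_ipx:
  assumes "\<forall>i<n. h * p i > 0"
  shows "(ipx n h p a b)\<^sup>2 \<le> ipx n h p a a * ipx n h p b b"
proof -
  let ?a = "\<lambda>i. sqrt (h * p i) * a i" and ?b = "\<lambda>i. sqrt (h * p i) * b i"
  have 1: "ipx n h p a b = (\<Sum>i<n. ?a i * ?b i)"
    unfolding ipx_def
  proof (intro sum.cong refl)
    fix i assume "i \<in> {..<n}"
    then have "h * p i > 0" using assms by auto
    then have "sqrt (h * p i) * sqrt (h * p i) = h * p i" by simp
    then show "h * p i * a i * b i = ?a i * ?b i" by (metis mult.assoc mult.left_commute)
  qed
  have 2: "ipx n h p a a = (\<Sum>i<n. (?a i)\<^sup>2)" "ipx n h p b b = (\<Sum>i<n. (?b i)\<^sup>2)"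
    unfolding ipx_def using assms by (auto intro!: sum.cong simp: power_mult_distrib power2_eq_square)
  show ?thesis unfolding 1 2 by (rule Cauchy_Schwarz_ineq_sum)
qed

lemma normsq1_ipx: "normsq1 n h p w = ipx n h p w w"
  unfolding normsq1_def ipx_def by (simp add: power2_eq_square mult.assoc)

lemma comm_est:
  assumes cb: "commutator_bound n h p Q C0" and sm: "smooth_on_closed {0..1} ub"
    and L: "\<bar>sup_deriv01 ub\<bar> \<le> L" and pos: "\<forall>i<n. h * p i > 0"
  shows "ipx n h p w (\<lambda>i. matvec n (sbpD h p Q) (\<lambda>k. ub (real k * h) * w k) i
           - ub (real i * h) * matvec n (sbpD h p Q) w i) \<le> \<bar>C0\<bar> * L * ipx n h p w w"
proof -
  define c where "c = (\<lambda>i. matvec n (sbpD h p Q) (\<lambda>k. ub (real k * h) * w k) i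
           - ub (real i * h) * matvec n (sbpD h p Q) w i)"
  define S where "S = sup_deriv01 ub"
  have hc: "sqrt (ipx n h p c c) \<le> C0 * S * sqrt (ipx n h p w w)"
    using cb sm unfolding commutator_bound_def c_def S_def normsq1_ipx Let_def by blast
  have ww: "ipx n h p w w \<ge> 0" by (rule ipx_nonneg[OF pos])
  have cc: "ipx n h p c c \<ge> 0" by (rule ipx_nonneg[OF pos])
  have "ipx n h p w c \<le> sqrt ((ipx n h p w c)\<^sup>2)" by simp
  also have "\<dots> \<le> sqrt (ipx n h p w w * ipx n h p c c)"
    by (rule real_sqrt_le_mono[OF cs_ipx[OF pos]])
  also have "\<dots> = sqrt (ipx n h p w w) * sqrt (ipx n h p c c)" by (rule real_sqrt_mult)
  also have "\<dots> \<le> sqrt (ipx n h p w w) * (C0 * S * sqrt (ipx n h p w w))"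
    by (rule mult_left_mono[OF hc]) (use ww in simp)
  also have "\<dots> = C0 * S * ipx n h p w w" using ww by (simp add: ac_simps)
  also have "\<dots> \<le> \<bar>C0\<bar> * L * ipx n h p w w"
  proof (rule mult_right_mono[OF _ ww])
    have "C0 * S \<le> \<bar>C0\<bar> * \<bar>S\<bar>" by (metis abs_ge_self abs_mult)
    also have "\<dots> \<le> \<bar>C0\<bar> * L" using L unfolding S_def by (simp add: mult_left_mono)
    finally show "C0 * S \<le> \<bar>C0\<bar> * L" .
  qed
  finally show ?thesis unfolding c_def .
qed

lemma ipP_add: "ipP N M hx hy px py v (\<lambda>i j. a i j + b i j) = ipP N M hx hy px py v a + ipP N M hx hy px py v b"
  unfolding ipP_def by (simp add: sum.distrib distrib_left)
lemma ipP_diff: "ipP N M hx hy px py v (\<lambda>i j. a i j - b i j) = ipP N M hx hy px py v a - ipP N M hx hy px py v b"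
  unfolding ipP_def by (simp add: sum_subtractf right_diff_distrib)
lemma ipP_neg: "ipP N M hx hy px py v (\<lambda>i j. - a i j) = - ipP N M hx hy px py v a"
  unfolding ipP_def by (simp add: sum_negf)
lemma ipP_scale: "ipP N M hx hy px py v (\<lambda>i j. r * a i j) = r * ipP N M hx hy px py v a"
  unfolding ipP_def by (simp add: sum_distrib_left ac_simps)

lemma advX:
  assumes Q: "sbp_Q N Q" and N: "N \<ge> 1" and pos: "\<forall>i<N. hx * px i > 0"
    and HC: "\<forall>j<M. ipx N hx px (\<lambda>i. W i j) (\<lambda>i. matvec N (sbpD hx px Q) (\<lambda>k. g k j * W k j) i
               - g i j * matvec N (sbpD hx px Q) (\<lambda>k. W k j) i) \<le> A * ipx N hx px (\<lambda>i. W i j) (\<lambda>i. W i j)"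
    and posy: "\<forall>j<M. hy * py j > 0"
  shows "- 2 * ipP N M hx hy px py W (\<lambda>i j. g i j * dX N (sbpD hx px Q) W i j)
     \<le> A * ipP N M hx hy px py W W - (\<Sum>j<M. hy * py j * (g (N-1) j * (W (N-1) j)\<^sup>2 - g 0 j * (W 0 j)\<^sup>2))"
proof -
  let ?D = "sbpD hx px Q"
  let ?ip = "ipP N M hx hy px py"
  define cm where "cm = (\<lambda>i j. dX N ?D (\<lambda>i j. g i j * W i j) i j - g i j * dX N ?D W i j)"
  have nz: "\<forall>i<N. hx * px i \<noteq> 0" using pos by auto
  have s: "?ip W (dX N ?D (\<lambda>i j. g i j * W i j)) + ?ip (\<lambda>i j. g i j * W i j) (dX N ?D W)
      = (\<Sum>j<M. hy * py j * (W (N-1) j * (g (N-1) j * W (N-1) j) - W 0 j * (g 0 j * W 0 j)))"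
    by (rule sbpX[OF Q N nz])
  have e1: "?ip (\<lambda>i j. g i j * W i j) (dX N ?D W) = ?ip W (\<lambda>i j. g i j * dX N ?D W i j)"
    unfolding ipP_def by (simp add: ac_simps)
  have e2: "dX N ?D (\<lambda>i j. g i j * W i j) = (\<lambda>i j. g i j * dX N ?D W i j + cm i j)"
    unfolding cm_def by simp
  have e3: "(\<Sum>j<M. hy * py j * (W (N-1) j * (g (N-1) j * W (N-1) j) - W 0 j * (g 0 j * W 0 j)))
       = (\<Sum>j<M. hy * py j * (g (N-1) j * (W (N-1) j)\<^sup>2 - g 0 j * (W 0 j)\<^sup>2))"
    by (simp add: power2_eq_square ac_simps)
  have cmb: "?ip W cm \<le> A * ?ip W W"
  proof -
    have "?ip W cm = (\<Sum>j<M. hy * py j * ipx N hx px (\<lambda>i. W i j) (\<lambda>i. cm i j))" by (rule ipP_rows)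
    also have "\<dots> \<le> (\<Sum>j<M. hy * py j * (A * ipx N hx px (\<lambda>i. W i j) (\<lambda>i. W i j)))"
    proof (rule sum_mono)
      fix j assume j: "j \<in> {..<M}"
      have "ipx N hx px (\<lambda>i. W i j) (\<lambda>i. cm i j) \<le> A * ipx N hx px (\<lambda>i. W i j) (\<lambda>i. W i j)"
        using HC j unfolding cm_def dX_mv by auto
      then show "hy * py j * ipx N hx px (\<lambda>i. W i j) (\<lambda>i. cm i j) \<le> hy * py j * (A * ipx N hx px (\<lambda>i. W i j) (\<lambda>i. W i j))"
        using posy j by (intro mult_left_mono) auto
    qed
    also have "\<dots> = A * ?ip W W" unfolding ipP_rows by (simp add: sum_distrib_left ac_simps)
    finally show ?thesis .
  qed
  have "?ip W (dX N ?D (\<lambda>i j. g i j * W i j)) = ?ip W (\<lambda>i j. g i j * dX N ?D W i j) + ?ip W cm"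
    unfolding e2 by (rule ipP_add)
  then show ?thesis using s e1 e3 cmb by linarith
qed

lemma advY:
  assumes Q: "sbp_Q M Q" and M: "M \<ge> 1" and pos: "\<forall>j<M. hy * py j > 0"
    and HC: "\<forall>i<N. ipx M hy py (W i) (\<lambda>j. matvec M (sbpD hy py Q) (\<lambda>k. g i k * W i k) j
               - g i j * matvec M (sbpD hy py Q) (W i) j) \<le> A * ipx M hy py (W i) (W i)"
    and posx: "\<forall>i<N. hx * px i > 0"
  shows "- 2 * ipP N M hx hy px py W (\<lambda>i j. g i j * dY M (sbpD hy py Q) W i j)
     \<le> A * ipP N M hx hy px py W W - (\<Sum>i<N. hx * px i * (g i (M-1) * (W i (M-1))\<^sup>2 - g i 0 * (W i 0)\<^sup>2))"
proof -
  let ?D = "sbpD hy py Q"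
  let ?ip = "ipP N M hx hy px py"
  define cm where "cm = (\<lambda>i j. dY M ?D (\<lambda>i j. g i j * W i j) i j - g i j * dY M ?D W i j)"
  have nz: "\<forall>j<M. hy * py j \<noteq> 0" using pos by auto
  have s: "?ip W (dY M ?D (\<lambda>i j. g i j * W i j)) + ?ip (\<lambda>i j. g i j * W i j) (dY M ?D W)
      = (\<Sum>i<N. hx * px i * (W i (M-1) * (g i (M-1) * W i (M-1)) - W i 0 * (g i 0 * W i 0)))"
    by (rule sbpY[OF Q M nz])
  have e1: "?ip (\<lambda>i j. g i j * W i j) (dY M ?D W) = ?ip W (\<lambda>i j. g i j * dY M ?D W i j)"
    unfolding ipP_def by (simp add: ac_simps)
  have e2: "dY M ?D (\<lambda>i j. g i j * W i j) = (\<lambda>i j. g i j * dY M ?D W i j + cm i j)"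
    unfolding cm_def by simp
  have e3: "(\<Sum>i<N. hx * px i * (W i (M-1) * (g i (M-1) * W i (M-1)) - W i 0 * (g i 0 * W i 0)))
       = (\<Sum>i<N. hx * px i * (g i (M-1) * (W i (M-1))\<^sup>2 - g i 0 * (W i 0)\<^sup>2))"
    by (simp add: power2_eq_square ac_simps)
  have cmb: "?ip W cm \<le> A * ?ip W W"
  proof -
    have "?ip W cm = (\<Sum>i<N. hx * px i * ipx M hy py (W i) (cm i))" by (rule ipP_cols)
    also have "\<dots> \<le> (\<Sum>i<N. hx * px i * (A * ipx M hy py (W i) (W i)))"
    proof (rule sum_mono)
      fix i assume i: "i \<in> {..<N}"
      have "ipx M hy py (W i) (cm i) \<le> A * ipx M hy py (W i) (W i)"
        using HC i unfolding cm_def dY_mv by auto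
      then show "hx * px i * ipx M hy py (W i) (cm i) \<le> hx * px i * (A * ipx M hy py (W i) (W i))"
        using posx i by (intro mult_left_mono) auto
    qed
    also have "\<dots> = A * ?ip W W" unfolding ipP_cols by (simp add: sum_distrib_left ac_simps)
    finally show ?thesis .
  qed
  have "?ip W (dY M ?D (\<lambda>i j. g i j * W i j)) = ?ip W (\<lambda>i j. g i j * dY M ?D W i j) + ?ip W cm"
    unfolding e2 by (rule ipP_add)
  then show ?thesis using s e1 e3 cmb by linarith
qed

lemma sum_ifs:
  fixes f g :: "nat \<Rightarrow> real"
  assumes "a < n" "b < n"
  shows "(\<Sum>i<n. c * ((if i = a then f i else 0) + (if i = b then g i else 0))) = c * (f a + g b)"
proof -
  have "(\<Sum>i<n. c * ((if i = a then f i else 0) + (if i = b then g i else 0)))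
      = c * ((\<Sum>i<n. (if i = a then f i else 0)) + (\<Sum>i<n. (if i = b then g i else 0)))"
    by (simp only: sum_distrib_left[symmetric] sum.distrib[symmetric])
  also have "\<dots> = c * (f a + g b)" using assms by simp
  finally show ?thesis .
qed

lemma penalty:
  assumes N: "N \<ge> 1" and M: "M \<ge> 1" and px: "\<forall>i<N. hx * px i \<noteq> 0" and py: "\<forall>j<M. hy * py j \<noteq> 0"
  shows "ipP N M hx hy px py W (penB N M hx hy px py SL SR SD SU W)
    = (\<Sum>j<M. hy * py j * (SL 0 j * (W 0 j)\<^sup>2 + SR (N-1) j * (W (N-1) j)\<^sup>2))
    + (\<Sum>i<N. hx * px i * (SD i 0 * (W i 0)\<^sup>2 + SU i (M-1) * (W i (M-1))\<^sup>2))"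
proof -
  have pw: "hx * px i * hy * py j * W i j * penB N M hx hy px py SL SR SD SU W i j
     = hy * py j * ((if i = 0 then SL i j * (W i j)\<^sup>2 else 0) + (if i = N - 1 then SR i j * (W i j)\<^sup>2 else 0))
     + hx * px i * ((if j = 0 then SD i j * (W i j)\<^sup>2 else 0) + (if j = M - 1 then SU i j * (W i j)\<^sup>2 else 0))"
    if "i < N" "j < M" for i j
  proof -
    have a: "hx * px i \<noteq> 0" and b: "hy * py j \<noteq> 0" using px py that by auto
    show ?thesis unfolding penB_def using a b
      by (simp add: field_simps power2_eq_square)
  qed
  have "ipP N M hx hy px py W (penB N M hx hy px py SL SR SD SU W)
     = (\<Sum>i<N. \<Sum>j<M. hy * py j * ((if i = 0 then SL i j * (W i j)\<^sup>2 else 0) + (if i = N - 1 then SR i j * (W i j)\<^sup>2 else 0)))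
     + (\<Sum>i<N. \<Sum>j<M. hx * px i * ((if j = 0 then SD i j * (W i j)\<^sup>2 else 0) + (if j = M - 1 then SU i j * (W i j)\<^sup>2 else 0)))"
    unfolding ipP_def by (simp add: pw sum.distrib)
  also have "(\<Sum>i<N. \<Sum>j<M. hy * py j * ((if i = 0 then SL i j * (W i j)\<^sup>2 else 0) + (if i = N - 1 then SR i j * (W i j)\<^sup>2 else 0)))
     = (\<Sum>j<M. hy * py j * (SL 0 j * (W 0 j)\<^sup>2 + SR (N-1) j * (W (N-1) j)\<^sup>2))"
    apply (subst sum.swap)
    apply (intro sum.cong refl)
    using N by (subst sum_ifs) auto
  also have "(\<Sum>i<N. \<Sum>j<M. hx * px i * ((if j = 0 then SD i j * (W i j)\<^sup>2 else 0) + (if j = M - 1 then SU i j * (W i j)\<^sup>2 else 0)))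
     = (\<Sum>i<N. hx * px i * (SD i 0 * (W i 0)\<^sup>2 + SU i (M-1) * (W i (M-1))\<^sup>2))"
    apply (intro sum.cong refl)
    using M by (subst sum_ifs) auto
  finally show ?thesis .
qed

lemma dXdY_comm: "dX N Dx (dY M Dy W) = dY M Dy (dX N Dx W)"
  unfolding dX_def dY_def
  by (intro ext) (simp add: sum_distrib_left ac_simps sum.swap[of _ "{..<N}"])

lemma dY_diff: "dY M Dy (\<lambda>i j. a i j - b i j) = (\<lambda>i j. dY M Dy a i j - dY M Dy b i j)"
  unfolding dY_def by (simp add: right_diff_distrib sum_subtractf)
lemma dX_diff: "dX N Dx (\<lambda>i j. a i j - b i j) = (\<lambda>i j. dX N Dx a i j - dX N Dx b i j)"
  unfolding dX_def by (simp add: right_diff_distrib sum_subtractf)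

lemma curl:
  assumes Qx: "sbp_Q N Qx" and Qy: "sbp_Q M Qy" and N: "N \<ge> 1" and M: "M \<ge> 1"
    and px: "\<forall>i<N. hx * px i \<noteq> 0" and py: "\<forall>j<M. hy * py j \<noteq> 0"
    and Dx: "Dx = sbpD hx px Qx" and Dy: "Dy = sbpD hy py Qy"
    and c: "c = (\<lambda>i j. dX N Dx V2 i j - dY M Dy V1 i j)"
  shows "ipP N M hx hy px py V1 (\<lambda>i j. - dY M Dy (dY M Dy V1) i j + dX N Dx (dY M Dy V2) i j)
       + ipP N M hx hy px py V2 (\<lambda>i j. dX N Dx (dY M Dy V1) i j - dX N Dx (dX N Dx V2) i j)
       = ipP N M hx hy px py c c + (\<Sum>i<N. hx * px i * (V1 i (M-1) * c i (M-1) - V1 i 0 * c i 0))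
         - (\<Sum>j<M. hy * py j * (V2 (N-1) j * c (N-1) j - V2 0 j * c 0 j))"
proof -
  let ?ip = "ipP N M hx hy px py"
  have f1: "(\<lambda>i j. - dY M Dy (dY M Dy V1) i j + dX N Dx (dY M Dy V2) i j) = dY M Dy c"
    unfolding c dY_diff dXdY_comm by (intro ext) simp
  have f2: "(\<lambda>i j. dX N Dx (dY M Dy V1) i j - dX N Dx (dX N Dx V2) i j) = (\<lambda>i j. - dX N Dx c i j)"
    unfolding c dX_diff dXdY_comm by (intro ext) simp
  have sy: "?ip V1 (dY M Dy c) + ?ip c (dY M Dy V1) = (\<Sum>i<N. hx * px i * (V1 i (M-1) * c i (M-1) - V1 i 0 * c i 0))"
    unfolding Dy by (rule sbpY[OF Qy M py])
  have sx: "?ip V2 (dX N Dx c) + ?ip c (dX N Dx V2) = (\<Sum>j<M. hy * py j * (V2 (N-1) j * c (N-1) j - V2 0 j * c 0 j))"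
    unfolding Dx by (rule sbpX[OF Qx N px])
  have cc: "?ip c c = ?ip c (dX N Dx V2) - ?ip c (dY M Dy V1)"
    by (subst (2) c) (rule ipP_diff)
  have n2: "?ip V2 (\<lambda>i j. - dX N Dx c i j) = - ?ip V2 (dX N Dx c)" by (rule ipP_neg)
  show ?thesis unfolding f1 f2 n2 using sy sx cc by linarith
qed

lemma bnd_pt:
  fixes u s t hp e a b cc :: real
  assumes us: "- u + 2 * s \<le> 0" and t: "t \<le> - 1 / (2 * hp)" and hp: "hp > 0" and e: "e > 0"
  shows "- u * a\<^sup>2 - u * b\<^sup>2 + 2 * (s + e * t) * a\<^sup>2 + 2 * (s + e * t) * b\<^sup>2 + 2 * e * b * cc \<le> e * hp * cc\<^sup>2"
proof -
  have 1: "(- u + 2 * s) * a\<^sup>2 \<le> 0" using us by (simp add: mult_nonpos_nonneg)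
  have 2: "(- u + 2 * s) * b\<^sup>2 \<le> 0" using us by (simp add: mult_nonpos_nonneg)
  have tt: "2 * t * hp \<le> - 1" using t hp by (simp add: field_simps)
  have 3: "2 * e * t * hp * a\<^sup>2 \<le> - e * a\<^sup>2"
  proof -
    have "(2 * t * hp) * (e * a\<^sup>2) \<le> (-1) * (e * a\<^sup>2)" using tt e by (intro mult_right_mono) auto
    then show ?thesis by (simp add: ac_simps)
  qed
  have 4: "2 * e * t * hp * b\<^sup>2 \<le> - e * b\<^sup>2"
  proof -
    have "(2 * t * hp) * (e * b\<^sup>2) \<le> (-1) * (e * b\<^sup>2)" using tt e by (intro mult_right_mono) auto
    then show ?thesis by (simp add: ac_simps)
  qed
  have 5: "2 * e * b * cc * hp \<le> e * b\<^sup>2 + e * hp\<^sup>2 * cc\<^sup>2"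
  proof -
    have "0 \<le> e * (b - hp * cc)\<^sup>2" using e by simp
    then show ?thesis by (simp add: power2_eq_square algebra_simps)
  qed
  have "(- u * a\<^sup>2 - u * b\<^sup>2 + 2 * (s + e * t) * a\<^sup>2 + 2 * (s + e * t) * b\<^sup>2 + 2 * e * b * cc) * hp
     = (- u + 2 * s) * a\<^sup>2 * hp + (- u + 2 * s) * b\<^sup>2 * hp + 2 * e * t * hp * a\<^sup>2 + 2 * e * t * hp * b\<^sup>2 + 2 * e * b * cc * hp"
    by (simp add: algebra_simps)
  also have "\<dots> \<le> e * hp * cc\<^sup>2 * hp"
  proof -
    have "(- u + 2 * s) * a\<^sup>2 * hp \<le> 0" using 1 hp by (simp add: mult_nonpos_nonneg)
    moreover have "(- u + 2 * s) * b\<^sup>2 * hp \<le> 0" using 2 hp by (simp add: mult_nonpos_nonneg)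
    moreover have "e * a\<^sup>2 \<ge> 0" using e by simp
    moreover have "e * hp\<^sup>2 * cc\<^sup>2 = e * hp * cc\<^sup>2 * hp" by (simp add: power2_eq_square)
    ultimately show ?thesis using 3 4 5 by linarith
  qed
  finally show ?thesis using hp by (simp add: ac_simps)
qed

lemma two_le_sum:
  fixes f :: "nat \<Rightarrow> real"
  assumes "n \<ge> 2" "\<forall>i<n. f i \<ge> 0"
  shows "f 0 + f (n - 1) \<le> (\<Sum>i<n. f i)"
proof -
  have "f 0 + f (n - 1) = (\<Sum>i\<in>{0, n-1}. f i)" using assms(1) by simp
  also have "\<dots> \<le> (\<Sum>i<n. f i)"
    by (rule sum_mono2) (use assms in auto)
  finally show ?thesis .
qed

lemma react_pt:
  fixes a b c d x y K :: real
  assumes "\<bar>a\<bar> \<le> K" "\<bar>b\<bar> \<le> K" "\<bar>c\<bar> \<le> K" "\<bar>d\<bar> \<le> K"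
  shows "x * (- a * x + b * y) + y * (c * x - d * y) \<le> 2 * K * (x * x + y * y)"
proof -
  have 1: "- a * (x * x) \<le> K * (x * x)"
    using assms(1) by (intro mult_right_mono) (auto simp: abs_le_iff)
  have 2: "- d * (y * y) \<le> K * (y * y)"
    using assms(4) by (intro mult_right_mono) (auto simp: abs_le_iff)
  have "(b + c) * (x * y) \<le> \<bar>b + c\<bar> * \<bar>x * y\<bar>" by (metis abs_ge_self abs_mult)
  also have "\<dots> \<le> (2 * K) * \<bar>x * y\<bar>" using assms(2,3) by (intro mult_right_mono) auto
  also have "\<dots> \<le> K * (x * x + y * y)"
  proof -
    have "2 * \<bar>x * y\<bar> \<le> x * x + y * y"
      using sum_squares_bound[of "\<bar>x\<bar>" "\<bar>y\<bar>"] by (simp add: abs_mult power2_eq_square)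
    moreover have "K \<ge> 0" using assms(1) by linarith
    ultimately show ?thesis by (metis mult.assoc mult.left_commute mult_left_mono)
  qed
  finally have 3: "(b + c) * (x * y) \<le> K * (x * x + y * y)" .
  have "x * (- a * x + b * y) + y * (c * x - d * y) = - a * (x * x) - d * (y * y) + (b + c) * (x * y)"
    by (simp add: algebra_simps)
  then show ?thesis using 1 2 3 by (simp add: algebra_simps)
qed

lemma reaction:
  assumes K: "\<forall>i<N. \<forall>j<M. \<bar>a i j\<bar> \<le> K \<and> \<bar>b i j\<bar> \<le> K \<and> \<bar>c i j\<bar> \<le> K \<and> \<bar>d i j\<bar> \<le> K"
    and px: "\<forall>i<N. hx * px i > 0" and py: "\<forall>j<M. hy * py j > 0"
  shows "ipP N M hx hy px py W1 (\<lambda>i j. - a i j * W1 i j + b i j * W2 i j)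
       + ipP N M hx hy px py W2 (\<lambda>i j. c i j * W1 i j - d i j * W2 i j)
       \<le> 2 * K * normsqP N M hx hy px py W1 W2"
proof -
  have "ipP N M hx hy px py W1 (\<lambda>i j. - a i j * W1 i j + b i j * W2 i j)
       + ipP N M hx hy px py W2 (\<lambda>i j. c i j * W1 i j - d i j * W2 i j)
     = (\<Sum>i<N. \<Sum>j<M. hx * px i * hy * py j * (W1 i j * (- a i j * W1 i j + b i j * W2 i j) + W2 i j * (c i j * W1 i j - d i j * W2 i j)))"
    unfolding ipP_def by (simp add: sum.distrib[symmetric] algebra_simps)
  also have "\<dots> \<le> (\<Sum>i<N. \<Sum>j<M. hx * px i * hy * py j * (2 * K * (W1 i j * W1 i j + W2 i j * W2 i j)))"
  proof (intro sum_mono)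
    fix i j assume i: "i \<in> {..<N}" and j: "j \<in> {..<M}"
    have w: "hx * px i * hy * py j \<ge> 0" using px py i j
      by (metis lessThan_iff less_imp_le mult.assoc mult_pos_pos)
    show "hx * px i * hy * py j * (W1 i j * (- a i j * W1 i j + b i j * W2 i j) + W2 i j * (c i j * W1 i j - d i j * W2 i j))
        \<le> hx * px i * hy * py j * (2 * K * (W1 i j * W1 i j + W2 i j * W2 i j))"
      using K i j w by (intro mult_left_mono react_pt) auto
  qed
  also have "\<dots> = 2 * K * normsqP N M hx hy px py W1 W2"
    unfolding normsqP_def ipP_def by (simp add: sum.distrib[symmetric] sum_distrib_left algebra_simps)
  finally show ?thesis .
qed


lemma negp: "(s::real) \<le> neg_part u / 2 \<Longrightarrow> - u + 2 * s \<le> 0"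
  unfolding neg_part_def by linarith
lemma posp: "(s::real) \<le> - pos_part u / 2 \<Longrightarrow> - (- u) + 2 * s \<le> 0"
  unfolding pos_part_def by linarith

lemma final_comb:
  fixes P1x P2x P1y P2y ip11 ip22 A1 A2 AX1 AX2 AY1 AY2 B1 B2 PX1 PY1 PX2 PY2 e X1 X2 cc CB1 CB2 R1 R2 KE SX SY G :: real
  assumes b1: "- 2 * P1x \<le> A1 * ip11 - AX1"
  and b2: "- 2 * P2x \<le> A1 * ip22 - AX2"
  and b3: "- 2 * P1y \<le> A2 * ip11 - AY1"
  and b4: "- 2 * P2y \<le> A2 * ip22 - AY2"
  and b5: "B1 = PX1 + PY1" and b6: "B2 = PX2 + PY2"
  and b7: "e * X1 + e * X2 = e * cc + e * CB1 - e * CB2"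
  and b8: "R1 + R2 \<le> KE"
  and b9: "- AX1 - AX2 + 2 * PX1 + 2 * PX2 + 2 * (e * CB2) \<le> SX"
  and b10: "- AY1 - AY2 + 2 * PY1 + 2 * PY2 - 2 * (e * CB1) \<le> SY"
  and b11: "SX + SY \<le> 2 * (e * cc)"
  and fin: "A1 * ip11 + A1 * ip22 + A2 * ip11 + A2 * ip22 + 2 * KE \<le> G"
  shows "- 2 * P1x + - 2 * P1y + - 2 * P2x + - 2 * P2y + 2 * (R1 + R2) - 2 * (e * X1 + e * X2) + 2 * B1 + 2 * B2 \<le> G"
  unfolding distrib_left right_diff_distrib using assms by linarith

lemma energy:
  fixes u1 u2 :: "real \<times> real \<Rightarrow> real"
  assumes eps: "\<epsilon> > 0"
    and hx: "hx > 0" and hy: "hy > 0" and Nh: "(real N - 1) * hx = 1" and Mh: "(real M - 1) * hy = 1"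
    and pxp: "\<forall>i<N. px i > 0" and pyp: "\<forall>j<M. py j > 0"
    and Qx: "sbp_Q N Qx" and Qy: "sbp_Q M Qy"
    and p0: "p = px 0" "p = px (N - 1)" "p = py 0" "p = py (M - 1)"
    and cbx: "commutator_bound N hx px Qx C0" and cby: "commutator_bound M hy py Qy C0"
    and Dx: "Dx = sbpD hx px Qx" and Dy: "Dy = sbpD hy py Qy"
    and g1: "g1 = (\<lambda>i j. u1 (real i * hx, real j * hy))"
    and g2: "g2 = (\<lambda>i j. u2 (real i * hx, real j * hy))"
    and Kb: "\<forall>i<N. \<forall>j<M. \<bar>dX N Dx g1 i j\<bar> \<le> K \<and> \<bar>dX N Dx g2 i j\<bar> \<le> K
                   \<and> \<bar>dY M Dy g1 i j\<bar> \<le> K \<and> \<bar>dY M Dy g2 i j\<bar> \<le> K"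
    and sR1b: "\<forall>j<M. sR1 (N - 1) j \<le> neg_part (u1 (1, real j * hy)) / 2"
    and sL1b: "\<forall>j<M. sL1 0 j \<le> - pos_part (u1 (0, real j * hy)) / 2"
    and sU1b: "\<forall>i<N. sU1 i (M - 1) \<le> neg_part (u2 (real i * hx, 1)) / 2"
    and sD1b: "\<forall>i<N. sD1 i 0 \<le> - pos_part (u2 (real i * hx, 0)) / 2"
    and tR: "tR \<le> - 1 / (2 * p * hx)" and tL: "tL \<le> - 1 / (2 * p * hx)"
    and tU: "tU \<le> - 1 / (2 * p * hy)" and tD: "tD \<le> - 1 / (2 * p * hy)"
    and sR2: "\<forall>i<N. \<forall>j<M. sR2 i j = (if i = N - 1 then tR else 0)"
    and sL2: "\<forall>i<N. \<forall>j<M. sL2 i j = (if i = 0 then tL else 0)"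
    and sU2: "\<forall>i<N. \<forall>j<M. sU2 i j = (if j = M - 1 then tU else 0)"
    and sD2: "\<forall>i<N. \<forall>j<M. sD2 i j = (if j = 0 then tD else 0)"
    and SL: "SL = (\<lambda>i j. sL1 i j + \<epsilon> * sL2 i j)" and SR: "SR = (\<lambda>i j. sR1 i j + \<epsilon> * sR2 i j)"
    and SD: "SD = (\<lambda>i j. sD1 i j + \<epsilon> * sD2 i j)" and SU: "SU = (\<lambda>i j. sU1 i j + \<epsilon> * sU2 i j)"
    and B: "B = penB N M hx hy px py SL SR SD SU"
    and HX: "\<forall>j<M. smooth_on_closed {0..1} (\<lambda>x. u1 (x, real j * hy)) \<and> \<bar>sup_deriv01 (\<lambda>x. u1 (x, real j * hy))\<bar> \<le> L1"
    and HY: "\<forall>i<N. smooth_on_closed {0..1} (\<lambda>y. u2 (real i * hx, y)) \<and> \<bar>sup_deriv01 (\<lambda>y. u2 (real i * hx, y))\<bar> \<le> L2"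
  shows "2 * ipP N M hx hy px py W1 (\<lambda>i j.
             - g1 i j * dX N Dx W1 i j - g2 i j * dY M Dy W1 i j
             + (- dY M Dy g2 i j * W1 i j + dY M Dy g1 i j * W2 i j)
             - \<epsilon> * (- dY M Dy (dY M Dy W1) i j + dX N Dx (dY M Dy W2) i j)
             + B W1 i j)
       + 2 * ipP N M hx hy px py W2 (\<lambda>i j.
             - g1 i j * dX N Dx W2 i j - g2 i j * dY M Dy W2 i j
             + (dX N Dx g2 i j * W1 i j - dX N Dx g1 i j * W2 i j)
             - \<epsilon> * (dX N Dx (dY M Dy W1) i j - dX N Dx (dX N Dx W2) i j)
             + B W2 i j)
       \<le> (\<bar>C0\<bar> * (L1 + L2) + 4 * \<bar>K\<bar>) * normsqP N M hx hy px py W1 W2"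
proof -
  let ?ip = "ipP N M hx hy px py"
  have "real N - 1 > 0" using Nh hx by (metis zero_less_mult_pos2 zero_less_one)
  then have N2: "N \<ge> 2" by linarith
  have "real M - 1 > 0" using Mh hy by (metis zero_less_mult_pos2 zero_less_one)
  then have M2: "M \<ge> 2" by linarith
  have N1: "N \<ge> 1" and M1: "M \<ge> 1" using N2 M2 by auto
  have posx: "\<forall>i<N. hx * px i > 0" using pxp hx by auto
  have posy: "\<forall>j<M. hy * py j > 0" using pyp hy by auto
  have nzx: "\<forall>i<N. hx * px i \<noteq> 0" using posx by auto
  have nzy: "\<forall>j<M. hy * py j \<noteq> 0" using posy by auto
  have pp: "p > 0" using pxp p0(1) N1 by auto
  have hpx: "p * hx > 0" using pp hx by simp
  have hpy: "p * hy > 0" using pp hy by simp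

  have split1: "?ip W1 (\<lambda>i j.
             - g1 i j * dX N Dx W1 i j - g2 i j * dY M Dy W1 i j
             + (- dY M Dy g2 i j * W1 i j + dY M Dy g1 i j * W2 i j)
             - \<epsilon> * (- dY M Dy (dY M Dy W1) i j + dX N Dx (dY M Dy W2) i j)
             + B W1 i j)
     = - ?ip W1 (\<lambda>i j. g1 i j * dX N Dx W1 i j) - ?ip W1 (\<lambda>i j. g2 i j * dY M Dy W1 i j)
       + ?ip W1 (\<lambda>i j. - dY M Dy g2 i j * W1 i j + dY M Dy g1 i j * W2 i j)
       - \<epsilon> * ?ip W1 (\<lambda>i j. - dY M Dy (dY M Dy W1) i j + dX N Dx (dY M Dy W2) i j)
       + ?ip W1 (B W1)"
    by (simp only: ipP_add ipP_diff ipP_neg ipP_scale mult_minus_left)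
  have split2: "?ip W2 (\<lambda>i j.
             - g1 i j * dX N Dx W2 i j - g2 i j * dY M Dy W2 i j
             + (dX N Dx g2 i j * W1 i j - dX N Dx g1 i j * W2 i j)
             - \<epsilon> * (dX N Dx (dY M Dy W1) i j - dX N Dx (dX N Dx W2) i j)
             + B W2 i j)
     = - ?ip W2 (\<lambda>i j. g1 i j * dX N Dx W2 i j) - ?ip W2 (\<lambda>i j. g2 i j * dY M Dy W2 i j)
       + ?ip W2 (\<lambda>i j. dX N Dx g2 i j * W1 i j - dX N Dx g1 i j * W2 i j)
       - \<epsilon> * ?ip W2 (\<lambda>i j. dX N Dx (dY M Dy W1) i j - dX N Dx (dX N Dx W2) i j)
       + ?ip W2 (B W2)"
    by (simp only: ipP_add ipP_diff ipP_neg ipP_scale mult_minus_left)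
  have HCx: "\<forall>j<M. ipx N hx px (\<lambda>i. W i j) (\<lambda>i. matvec N (sbpD hx px Qx) (\<lambda>k. g1 k j * W k j) i
               - g1 i j * matvec N (sbpD hx px Qx) (\<lambda>k. W k j) i) \<le> (\<bar>C0\<bar> * L1) * ipx N hx px (\<lambda>i. W i j) (\<lambda>i. W i j)"
    for W
  proof (intro allI impI)
    fix j assume j: "j < M"
    have sm: "smooth_on_closed {0..1} (\<lambda>x. u1 (x, real j * hy))" and L: "\<bar>sup_deriv01 (\<lambda>x. u1 (x, real j * hy))\<bar> \<le> L1"
      using HX j by auto
    show "ipx N hx px (\<lambda>i. W i j) (\<lambda>i. matvec N (sbpD hx px Qx) (\<lambda>k. g1 k j * W k j) i
               - g1 i j * matvec N (sbpD hx px Qx) (\<lambda>k. W k j) i) \<le> (\<bar>C0\<bar> * L1) * ipx N hx px (\<lambda>i. W i j) (\<lambda>i. W i j)"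
      using comm_est[OF cbx sm L posx, of "\<lambda>i. W i j"] unfolding g1 by simp
  qed
  have HCy: "\<forall>i<N. ipx M hy py (W i) (\<lambda>j. matvec M (sbpD hy py Qy) (\<lambda>k. g2 i k * W i k) j
               - g2 i j * matvec M (sbpD hy py Qy) (W i) j) \<le> (\<bar>C0\<bar> * L2) * ipx M hy py (W i) (W i)"
    for W
  proof (intro allI impI)
    fix i assume i: "i < N"
    have sm: "smooth_on_closed {0..1} (\<lambda>y. u2 (real i * hx, y))" and L: "\<bar>sup_deriv01 (\<lambda>y. u2 (real i * hx, y))\<bar> \<le> L2"
      using HY i by auto
    show "ipx M hy py (W i) (\<lambda>j. matvec M (sbpD hy py Qy) (\<lambda>k. g2 i k * W i k) j
               - g2 i j * matvec M (sbpD hy py Qy) (W i) j) \<le> (\<bar>C0\<bar> * L2) * ipx M hy py (W i) (W i)"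
      using comm_est[OF cby sm L posy, of "W i"] unfolding g2 by simp
  qed
  have aX: "- 2 * ?ip W (\<lambda>i j. g1 i j * dX N Dx W i j)
     \<le> (\<bar>C0\<bar> * L1) * ?ip W W - (\<Sum>j<M. hy * py j * (g1 (N-1) j * (W (N-1) j)\<^sup>2 - g1 0 j * (W 0 j)\<^sup>2))" for W
    unfolding Dx by (rule advX[OF Qx N1 posx HCx posy])
  have aY: "- 2 * ?ip W (\<lambda>i j. g2 i j * dY M Dy W i j)
     \<le> (\<bar>C0\<bar> * L2) * ?ip W W - (\<Sum>i<N. hx * px i * (g2 i (M-1) * (W i (M-1))\<^sup>2 - g2 i 0 * (W i 0)\<^sup>2))" for W
    unfolding Dy by (rule advY[OF Qy M1 posy HCy posx])
  have pen: "?ip W (B W)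
    = (\<Sum>j<M. hy * py j * (SL 0 j * (W 0 j)\<^sup>2 + SR (N-1) j * (W (N-1) j)\<^sup>2))
    + (\<Sum>i<N. hx * px i * (SD i 0 * (W i 0)\<^sup>2 + SU i (M-1) * (W i (M-1))\<^sup>2))" for W
    unfolding B by (rule penalty[OF N1 M1 nzx nzy])
  define c where "c = (\<lambda>i j. dX N Dx W2 i j - dY M Dy W1 i j)"
  have cu: "?ip W1 (\<lambda>i j. - dY M Dy (dY M Dy W1) i j + dX N Dx (dY M Dy W2) i j)
       + ?ip W2 (\<lambda>i j. dX N Dx (dY M Dy W1) i j - dX N Dx (dX N Dx W2) i j)
       = ?ip c c + (\<Sum>i<N. hx * px i * (W1 i (M-1) * c i (M-1) - W1 i 0 * c i 0))
         - (\<Sum>j<M. hy * py j * (W2 (N-1) j * c (N-1) j - W2 0 j * c 0 j))"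
    by (rule curl[OF Qx Qy N1 M1 nzx nzy Dx Dy c_def])
  have re: "?ip W1 (\<lambda>i j. - dY M Dy g2 i j * W1 i j + dY M Dy g1 i j * W2 i j)
       + ?ip W2 (\<lambda>i j. dX N Dx g2 i j * W1 i j - dX N Dx g1 i j * W2 i j)
       \<le> 2 * K * normsqP N M hx hy px py W1 W2"
    by (rule reaction) (use Kb posx posy in auto)
  have g1R: "g1 (N-1) j = u1 (1, real j * hy)" for j
    using Nh N1 unfolding g1 by (simp add: of_nat_diff)
  have g1L: "g1 0 j = u1 (0, real j * hy)" for j unfolding g1 by simp
  have g2T: "g2 i (M-1) = u2 (real i * hx, 1)" for i
    using Mh M1 unfolding g2 by (simp add: of_nat_diff)
  have g2B: "g2 i 0 = u2 (real i * hx, 0)" for i unfolding g2 by simp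
  have nz: "N - 1 < N" "0 < N" "M - 1 < M" "0 < M" using N1 M1 by auto

  have Fx: "- (g1 (N-1) j * (W1 (N-1) j)\<^sup>2 - g1 0 j * (W1 0 j)\<^sup>2) - (g1 (N-1) j * (W2 (N-1) j)\<^sup>2 - g1 0 j * (W2 0 j)\<^sup>2)
      + 2 * (SL 0 j * (W1 0 j)\<^sup>2 + SR (N-1) j * (W1 (N-1) j)\<^sup>2) + 2 * (SL 0 j * (W2 0 j)\<^sup>2 + SR (N-1) j * (W2 (N-1) j)\<^sup>2)
      + 2 * \<epsilon> * (W2 (N-1) j * c (N-1) j - W2 0 j * c 0 j)
      \<le> \<epsilon> * (p * hx) * (c (N-1) j)\<^sup>2 + \<epsilon> * (p * hx) * (c 0 j)\<^sup>2" if j: "j < M" for j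
  proof -
    have SRv: "SR (N-1) j = sR1 (N-1) j + \<epsilon> * tR" using sR2 nz j unfolding SR by simp
    have SLv: "SL 0 j = sL1 0 j + \<epsilon> * tL" using sL2 nz j unfolding SL by simp
    have c1: "- g1 (N-1) j + 2 * sR1 (N-1) j \<le> 0"
      unfolding g1R by (rule negp) (use sR1b j in blast)
    have c2: "- (- g1 0 j) + 2 * sL1 0 j \<le> 0"
      unfolding g1L by (rule posp) (use sL1b j in blast)
    have R: "- g1 (N-1) j * (W1 (N-1) j)\<^sup>2 - g1 (N-1) j * (W2 (N-1) j)\<^sup>2 + 2 * (sR1 (N-1) j + \<epsilon> * tR) * (W1 (N-1) j)\<^sup>2
       + 2 * (sR1 (N-1) j + \<epsilon> * tR) * (W2 (N-1) j)\<^sup>2 + 2 * \<epsilon> * W2 (N-1) j * c (N-1) j \<le> \<epsilon> * (p * hx) * (c (N-1) j)\<^sup>2"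
      by (rule bnd_pt[OF c1 _ hpx eps]) (use tR in \<open>simp add: ac_simps\<close>)
    have L: "- (- g1 0 j) * (W1 0 j)\<^sup>2 - (- g1 0 j) * (- W2 0 j)\<^sup>2 + 2 * (sL1 0 j + \<epsilon> * tL) * (W1 0 j)\<^sup>2
       + 2 * (sL1 0 j + \<epsilon> * tL) * (- W2 0 j)\<^sup>2 + 2 * \<epsilon> * (- W2 0 j) * c 0 j \<le> \<epsilon> * (p * hx) * (c 0 j)\<^sup>2"
      by (rule bnd_pt[OF c2 _ hpx eps]) (use tL in \<open>simp add: ac_simps\<close>)
    show ?thesis using R L unfolding SRv SLv by (simp add: algebra_simps power2_eq_square)
  qed
  have Fy: "- (g2 i (M-1) * (W1 i (M-1))\<^sup>2 - g2 i 0 * (W1 i 0)\<^sup>2) - (g2 i (M-1) * (W2 i (M-1))\<^sup>2 - g2 i 0 * (W2 i 0)\<^sup>2)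
      + 2 * (SD i 0 * (W1 i 0)\<^sup>2 + SU i (M-1) * (W1 i (M-1))\<^sup>2) + 2 * (SD i 0 * (W2 i 0)\<^sup>2 + SU i (M-1) * (W2 i (M-1))\<^sup>2)
      - 2 * \<epsilon> * (W1 i (M-1) * c i (M-1) - W1 i 0 * c i 0)
      \<le> \<epsilon> * (p * hy) * (c i (M-1))\<^sup>2 + \<epsilon> * (p * hy) * (c i 0)\<^sup>2" if i: "i < N" for i
  proof -
    have SUv: "SU i (M-1) = sU1 i (M-1) + \<epsilon> * tU" using sU2 nz i unfolding SU by simp
    have SDv: "SD i 0 = sD1 i 0 + \<epsilon> * tD" using sD2 nz i unfolding SD by simp
    have c1: "- g2 i (M-1) + 2 * sU1 i (M-1) \<le> 0"
      unfolding g2T by (rule negp) (use sU1b i in blast)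
    have c2: "- (- g2 i 0) + 2 * sD1 i 0 \<le> 0"
      unfolding g2B by (rule posp) (use sD1b i in blast)
    have T: "- g2 i (M-1) * (W2 i (M-1))\<^sup>2 - g2 i (M-1) * (- W1 i (M-1))\<^sup>2 + 2 * (sU1 i (M-1) + \<epsilon> * tU) * (W2 i (M-1))\<^sup>2
       + 2 * (sU1 i (M-1) + \<epsilon> * tU) * (- W1 i (M-1))\<^sup>2 + 2 * \<epsilon> * (- W1 i (M-1)) * c i (M-1) \<le> \<epsilon> * (p * hy) * (c i (M-1))\<^sup>2"
      by (rule bnd_pt[OF c1 _ hpy eps]) (use tU in \<open>simp add: ac_simps\<close>)
    have Bo: "- (- g2 i 0) * (W2 i 0)\<^sup>2 - (- g2 i 0) * (W1 i 0)\<^sup>2 + 2 * (sD1 i 0 + \<epsilon> * tD) * (W2 i 0)\<^sup>2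
       + 2 * (sD1 i 0 + \<epsilon> * tD) * (W1 i 0)\<^sup>2 + 2 * \<epsilon> * (W1 i 0) * c i 0 \<le> \<epsilon> * (p * hy) * (c i 0)\<^sup>2"
      by (rule bnd_pt[OF c2 _ hpy eps]) (use tD in \<open>simp add: ac_simps\<close>)
    show ?thesis using T Bo unfolding SUv SDv by (simp add: algebra_simps power2_eq_square)
  qed
  have XB: "- (\<Sum>j<M. hy * py j * (g1 (N-1) j * (W1 (N-1) j)\<^sup>2 - g1 0 j * (W1 0 j)\<^sup>2))
     - (\<Sum>j<M. hy * py j * (g1 (N-1) j * (W2 (N-1) j)\<^sup>2 - g1 0 j * (W2 0 j)\<^sup>2))
     + 2 * (\<Sum>j<M. hy * py j * (SL 0 j * (W1 0 j)\<^sup>2 + SR (N-1) j * (W1 (N-1) j)\<^sup>2))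
     + 2 * (\<Sum>j<M. hy * py j * (SL 0 j * (W2 0 j)\<^sup>2 + SR (N-1) j * (W2 (N-1) j)\<^sup>2))
     + 2 * (\<epsilon> * (\<Sum>j<M. hy * py j * (W2 (N-1) j * c (N-1) j - W2 0 j * c 0 j)))
     \<le> (\<Sum>j<M. hy * py j * (\<epsilon> * (p * hx) * (c (N-1) j)\<^sup>2 + \<epsilon> * (p * hx) * (c 0 j)\<^sup>2))"
  proof -
    have "- (\<Sum>j<M. hy * py j * (g1 (N-1) j * (W1 (N-1) j)\<^sup>2 - g1 0 j * (W1 0 j)\<^sup>2))
     - (\<Sum>j<M. hy * py j * (g1 (N-1) j * (W2 (N-1) j)\<^sup>2 - g1 0 j * (W2 0 j)\<^sup>2))
     + 2 * (\<Sum>j<M. hy * py j * (SL 0 j * (W1 0 j)\<^sup>2 + SR (N-1) j * (W1 (N-1) j)\<^sup>2))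
     + 2 * (\<Sum>j<M. hy * py j * (SL 0 j * (W2 0 j)\<^sup>2 + SR (N-1) j * (W2 (N-1) j)\<^sup>2))
     + 2 * (\<epsilon> * (\<Sum>j<M. hy * py j * (W2 (N-1) j * c (N-1) j - W2 0 j * c 0 j)))
     = (\<Sum>j<M. hy * py j * (- (g1 (N-1) j * (W1 (N-1) j)\<^sup>2 - g1 0 j * (W1 0 j)\<^sup>2) - (g1 (N-1) j * (W2 (N-1) j)\<^sup>2 - g1 0 j * (W2 0 j)\<^sup>2)
      + 2 * (SL 0 j * (W1 0 j)\<^sup>2 + SR (N-1) j * (W1 (N-1) j)\<^sup>2) + 2 * (SL 0 j * (W2 0 j)\<^sup>2 + SR (N-1) j * (W2 (N-1) j)\<^sup>2)
      + 2 * \<epsilon> * (W2 (N-1) j * c (N-1) j - W2 0 j * c 0 j)))"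
      by (simp add: sum.distrib sum_subtractf sum_distrib_left algebra_simps)
    also have "\<dots> \<le> (\<Sum>j<M. hy * py j * (\<epsilon> * (p * hx) * (c (N-1) j)\<^sup>2 + \<epsilon> * (p * hx) * (c 0 j)\<^sup>2))"
      by (rule sum_mono, rule mult_left_mono) (use Fx posy in \<open>auto intro: less_imp_le\<close>)
    finally show ?thesis .
  qed
  have YB: "- (\<Sum>i<N. hx * px i * (g2 i (M-1) * (W1 i (M-1))\<^sup>2 - g2 i 0 * (W1 i 0)\<^sup>2))
     - (\<Sum>i<N. hx * px i * (g2 i (M-1) * (W2 i (M-1))\<^sup>2 - g2 i 0 * (W2 i 0)\<^sup>2))
     + 2 * (\<Sum>i<N. hx * px i * (SD i 0 * (W1 i 0)\<^sup>2 + SU i (M-1) * (W1 i (M-1))\<^sup>2))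
     + 2 * (\<Sum>i<N. hx * px i * (SD i 0 * (W2 i 0)\<^sup>2 + SU i (M-1) * (W2 i (M-1))\<^sup>2))
     - 2 * (\<epsilon> * (\<Sum>i<N. hx * px i * (W1 i (M-1) * c i (M-1) - W1 i 0 * c i 0)))
     \<le> (\<Sum>i<N. hx * px i * (\<epsilon> * (p * hy) * (c i (M-1))\<^sup>2 + \<epsilon> * (p * hy) * (c i 0)\<^sup>2))"
  proof -
    have "- (\<Sum>i<N. hx * px i * (g2 i (M-1) * (W1 i (M-1))\<^sup>2 - g2 i 0 * (W1 i 0)\<^sup>2))
     - (\<Sum>i<N. hx * px i * (g2 i (M-1) * (W2 i (M-1))\<^sup>2 - g2 i 0 * (W2 i 0)\<^sup>2))
     + 2 * (\<Sum>i<N. hx * px i * (SD i 0 * (W1 i 0)\<^sup>2 + SU i (M-1) * (W1 i (M-1))\<^sup>2))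
     + 2 * (\<Sum>i<N. hx * px i * (SD i 0 * (W2 i 0)\<^sup>2 + SU i (M-1) * (W2 i (M-1))\<^sup>2))
     - 2 * (\<epsilon> * (\<Sum>i<N. hx * px i * (W1 i (M-1) * c i (M-1) - W1 i 0 * c i 0)))
     = (\<Sum>i<N. hx * px i * (- (g2 i (M-1) * (W1 i (M-1))\<^sup>2 - g2 i 0 * (W1 i 0)\<^sup>2) - (g2 i (M-1) * (W2 i (M-1))\<^sup>2 - g2 i 0 * (W2 i 0)\<^sup>2)
      + 2 * (SD i 0 * (W1 i 0)\<^sup>2 + SU i (M-1) * (W1 i (M-1))\<^sup>2) + 2 * (SD i 0 * (W2 i 0)\<^sup>2 + SU i (M-1) * (W2 i (M-1))\<^sup>2)
      - 2 * \<epsilon> * (W1 i (M-1) * c i (M-1) - W1 i 0 * c i 0)))"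
      by (simp add: sum.distrib sum_subtractf sum_distrib_left algebra_simps)
    also have "\<dots> \<le> (\<Sum>i<N. hx * px i * (\<epsilon> * (p * hy) * (c i (M-1))\<^sup>2 + \<epsilon> * (p * hy) * (c i 0)\<^sup>2))"
      by (rule sum_mono, rule mult_left_mono) (use Fy posx in \<open>auto intro: less_imp_le\<close>)
    finally show ?thesis .
  qed
  have CC: "(\<Sum>j<M. hy * py j * (\<epsilon> * (p * hx) * (c (N-1) j)\<^sup>2 + \<epsilon> * (p * hx) * (c 0 j)\<^sup>2))
      + (\<Sum>i<N. hx * px i * (\<epsilon> * (p * hy) * (c i (M-1))\<^sup>2 + \<epsilon> * (p * hy) * (c i 0)\<^sup>2))
      \<le> 2 * (\<epsilon> * ?ip c c)"
  proof -
    have 1: "(\<Sum>j<M. hy * py j * ((p * hx) * (c (N-1) j)\<^sup>2 + (p * hx) * (c 0 j)\<^sup>2)) \<le> ?ip c c"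
      unfolding ipP_rows
    proof (rule sum_mono, rule mult_left_mono)
      fix j assume j: "j \<in> {..<M}"
      have "hx * px 0 * c 0 j * c 0 j + hx * px (N-1) * c (N-1) j * c (N-1) j
          \<le> (\<Sum>i<N. hx * px i * c i j * c i j)"
      proof (rule two_le_sum[OF N2, where f="\<lambda>i. hx * px i * c i j * c i j"], intro allI impI)
        fix i assume "i < N"
        then have "hx * px i > 0" using posx by auto
        then show "0 \<le> hx * px i * c i j * c i j"
          by (metis mult.assoc mult_nonneg_nonneg less_imp_le zero_le_square)
      qed
      then show "p * hx * (c (N - 1) j)\<^sup>2 + p * hx * (c 0 j)\<^sup>2 \<le> ipx N hx px (\<lambda>i. c i j) (\<lambda>i. c i j)"
        unfolding ipx_def using p0 by (simp add: power2_eq_square ac_simps)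
      show "0 \<le> hy * py j" using posy j by (auto intro: less_imp_le)
    qed
    have 2: "(\<Sum>i<N. hx * px i * ((p * hy) * (c i (M-1))\<^sup>2 + (p * hy) * (c i 0)\<^sup>2)) \<le> ?ip c c"
      unfolding ipP_cols
    proof (rule sum_mono, rule mult_left_mono)
      fix i assume i: "i \<in> {..<N}"
      have "hy * py 0 * c i 0 * c i 0 + hy * py (M-1) * c i (M-1) * c i (M-1)
          \<le> (\<Sum>j<M. hy * py j * c i j * c i j)"
      proof (rule two_le_sum[OF M2, where f="\<lambda>j. hy * py j * c i j * c i j"], intro allI impI)
        fix j assume "j < M"
        then have "hy * py j > 0" using posy by auto
        then show "0 \<le> hy * py j * c i j * c i j"
          by (metis mult.assoc mult_nonneg_nonneg less_imp_le zero_le_square)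
      qed
      then show "p * hy * (c i (M - 1))\<^sup>2 + p * hy * (c i 0)\<^sup>2 \<le> ipx M hy py (c i) (c i)"
        unfolding ipx_def using p0 by (simp add: power2_eq_square ac_simps)
      show "0 \<le> hx * px i" using posx i by (auto intro: less_imp_le)
    qed
    have e1: "(\<Sum>j<M. hy * py j * (\<epsilon> * (p * hx) * (c (N-1) j)\<^sup>2 + \<epsilon> * (p * hx) * (c 0 j)\<^sup>2))
       = \<epsilon> * (\<Sum>j<M. hy * py j * ((p * hx) * (c (N-1) j)\<^sup>2 + (p * hx) * (c 0 j)\<^sup>2))"
      by (simp add: sum_distrib_left algebra_simps)
    have e2: "(\<Sum>i<N. hx * px i * (\<epsilon> * (p * hy) * (c i (M-1))\<^sup>2 + \<epsilon> * (p * hy) * (c i 0)\<^sup>2))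
       = \<epsilon> * (\<Sum>i<N. hx * px i * ((p * hy) * (c i (M-1))\<^sup>2 + (p * hy) * (c i 0)\<^sup>2))"
      by (simp add: sum_distrib_left algebra_simps)
    have 3: "\<epsilon> * (\<Sum>j<M. hy * py j * ((p * hx) * (c (N-1) j)\<^sup>2 + (p * hx) * (c 0 j)\<^sup>2)) \<le> \<epsilon> * ?ip c c"
      by (rule mult_left_mono[OF 1]) (use eps in simp)
    have 4: "\<epsilon> * (\<Sum>i<N. hx * px i * ((p * hy) * (c i (M-1))\<^sup>2 + (p * hy) * (c i 0)\<^sup>2)) \<le> \<epsilon> * ?ip c c"
      by (rule mult_left_mono[OF 2]) (use eps in simp)
    show ?thesis unfolding e1 e2 using 3 4 by linarith
  qed
  have cu': "\<epsilon> * ?ip W1 (\<lambda>i j. - dY M Dy (dY M Dy W1) i j + dX N Dx (dY M Dy W2) i j)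
       + \<epsilon> * ?ip W2 (\<lambda>i j. dX N Dx (dY M Dy W1) i j - dX N Dx (dX N Dx W2) i j)
       = \<epsilon> * ?ip c c + \<epsilon> * (\<Sum>i<N. hx * px i * (W1 i (M-1) * c i (M-1) - W1 i 0 * c i 0))
         - \<epsilon> * (\<Sum>j<M. hy * py j * (W2 (N-1) j * c (N-1) j - W2 0 j * c 0 j))"
    by (simp only: distrib_left[symmetric] right_diff_distrib[symmetric] cu)
  define E where "E = normsqP N M hx hy px py W1 W2"
  have Edef: "E = ?ip W1 W1 + ?ip W2 W2" unfolding E_def normsqP_def ..
  have E0: "E \<ge> 0" unfolding Edef ipP_rows
    by (intro add_nonneg_nonneg sum_nonneg mult_nonneg_nonneg ipx_nonneg[OF posx]) (use hy pyp in \<open>auto intro: less_imp_le\<close>)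
  have fin: "(\<bar>C0\<bar> * L1) * ?ip W1 W1 + (\<bar>C0\<bar> * L1) * ?ip W2 W2 + (\<bar>C0\<bar> * L2) * ?ip W1 W1 + (\<bar>C0\<bar> * L2) * ?ip W2 W2
        + 2 * (2 * K * E) \<le> (\<bar>C0\<bar> * (L1 + L2) + 4 * \<bar>K\<bar>) * E"
  proof -
    have "(\<bar>C0\<bar> * L1) * ?ip W1 W1 + (\<bar>C0\<bar> * L1) * ?ip W2 W2 + (\<bar>C0\<bar> * L2) * ?ip W1 W1 + (\<bar>C0\<bar> * L2) * ?ip W2 W2
        + 2 * (2 * K * E) = (\<bar>C0\<bar> * (L1 + L2) + 4 * K) * E"
      unfolding Edef by (simp add: algebra_simps)
    also have "\<dots> \<le> (\<bar>C0\<bar> * (L1 + L2) + 4 * \<bar>K\<bar>) * E"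
      by (rule mult_right_mono[OF _ E0]) simp
    finally show ?thesis .
  qed
  note aX1 = aX[of W1] and aX2 = aX[of W2] and aY1 = aY[of W1] and aY2 = aY[of W2]
    and pen1 = pen[of W1] and pen2 = pen[of W2]
  let ?P1x = "?ip W1 (\<lambda>i j. g1 i j * dX N Dx W1 i j)" and ?P1y = "?ip W1 (\<lambda>i j. g2 i j * dY M Dy W1 i j)"
  let ?P2x = "?ip W2 (\<lambda>i j. g1 i j * dX N Dx W2 i j)" and ?P2y = "?ip W2 (\<lambda>i j. g2 i j * dY M Dy W2 i j)"
  let ?R1 = "?ip W1 (\<lambda>i j. - dY M Dy g2 i j * W1 i j + dY M Dy g1 i j * W2 i j)"
  let ?R2 = "?ip W2 (\<lambda>i j. dX N Dx g2 i j * W1 i j - dX N Dx g1 i j * W2 i j)"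
  let ?X1 = "?ip W1 (\<lambda>i j. - dY M Dy (dY M Dy W1) i j + dX N Dx (dY M Dy W2) i j)"
  let ?X2 = "?ip W2 (\<lambda>i j. dX N Dx (dY M Dy W1) i j - dX N Dx (dX N Dx W2) i j)"
  have st1: "2 * (- ?P1x - ?P1y + ?R1 - \<epsilon> * ?X1 + ?ip W1 (B W1)) + 2 * (- ?P2x - ?P2y + ?R2 - \<epsilon> * ?X2 + ?ip W2 (B W2))
     = (- 2 * ?P1x) + (- 2 * ?P1y) + (- 2 * ?P2x) + (- 2 * ?P2y) + 2 * (?R1 + ?R2) - 2 * (\<epsilon> * ?X1 + \<epsilon> * ?X2)
       + 2 * ?ip W1 (B W1) + 2 * ?ip W2 (B W2)"
    by (simp add: algebra_simps)
  define AX1 where "AX1 = (\<Sum>j<M. hy * py j * (g1 (N-1) j * (W1 (N-1) j)\<^sup>2 - g1 0 j * (W1 0 j)\<^sup>2))"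
  define AX2 where "AX2 = (\<Sum>j<M. hy * py j * (g1 (N-1) j * (W2 (N-1) j)\<^sup>2 - g1 0 j * (W2 0 j)\<^sup>2))"
  define AY1 where "AY1 = (\<Sum>i<N. hx * px i * (g2 i (M-1) * (W1 i (M-1))\<^sup>2 - g2 i 0 * (W1 i 0)\<^sup>2))"
  define AY2 where "AY2 = (\<Sum>i<N. hx * px i * (g2 i (M-1) * (W2 i (M-1))\<^sup>2 - g2 i 0 * (W2 i 0)\<^sup>2))"
  define PX1 where "PX1 = (\<Sum>j<M. hy * py j * (SL 0 j * (W1 0 j)\<^sup>2 + SR (N-1) j * (W1 (N-1) j)\<^sup>2))"
  define PX2 where "PX2 = (\<Sum>j<M. hy * py j * (SL 0 j * (W2 0 j)\<^sup>2 + SR (N-1) j * (W2 (N-1) j)\<^sup>2))"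
  define PY1 where "PY1 = (\<Sum>i<N. hx * px i * (SD i 0 * (W1 i 0)\<^sup>2 + SU i (M-1) * (W1 i (M-1))\<^sup>2))"
  define PY2 where "PY2 = (\<Sum>i<N. hx * px i * (SD i 0 * (W2 i 0)\<^sup>2 + SU i (M-1) * (W2 i (M-1))\<^sup>2))"
  define CB1 where "CB1 = (\<Sum>i<N. hx * px i * (W1 i (M-1) * c i (M-1) - W1 i 0 * c i 0))"
  define CB2 where "CB2 = (\<Sum>j<M. hy * py j * (W2 (N-1) j * c (N-1) j - W2 0 j * c 0 j))"
  define SX where "SX = (\<Sum>j<M. hy * py j * (\<epsilon> * (p * hx) * (c (N-1) j)\<^sup>2 + \<epsilon> * (p * hx) * (c 0 j)\<^sup>2))"
  define SY where "SY = (\<Sum>i<N. hx * px i * (\<epsilon> * (p * hy) * (c i (M-1))\<^sup>2 + \<epsilon> * (p * hy) * (c i 0)\<^sup>2))"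
  note defs = AX1_def[symmetric] AX2_def[symmetric] AY1_def[symmetric] AY2_def[symmetric]
    PX1_def[symmetric] PX2_def[symmetric] PY1_def[symmetric] PY2_def[symmetric]
    CB1_def[symmetric] CB2_def[symmetric] SX_def[symmetric] SY_def[symmetric]
  have b1: "- 2 * ?P1x \<le> (\<bar>C0\<bar> * L1) * ?ip W1 W1 - AX1" using aX1 unfolding defs .
  have b2: "- 2 * ?P2x \<le> (\<bar>C0\<bar> * L1) * ?ip W2 W2 - AX2" using aX2 unfolding defs .
  have b3: "- 2 * ?P1y \<le> (\<bar>C0\<bar> * L2) * ?ip W1 W1 - AY1" using aY1 unfolding defs .
  have b4: "- 2 * ?P2y \<le> (\<bar>C0\<bar> * L2) * ?ip W2 W2 - AY2" using aY2 unfolding defs .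
  have b5: "?ip W1 (B W1) = PX1 + PY1" using pen1 unfolding defs .
  have b6: "?ip W2 (B W2) = PX2 + PY2" using pen2 unfolding defs .
  have b7: "\<epsilon> * ?X1 + \<epsilon> * ?X2 = \<epsilon> * ?ip c c + \<epsilon> * CB1 - \<epsilon> * CB2" using cu' unfolding defs .
  have b8: "?R1 + ?R2 \<le> 2 * K * E" using re unfolding E_def .
  have b9: "- AX1 - AX2 + 2 * PX1 + 2 * PX2 + 2 * (\<epsilon> * CB2) \<le> SX" using XB unfolding defs .
  have b10: "- AY1 - AY2 + 2 * PY1 + 2 * PY2 - 2 * (\<epsilon> * CB1) \<le> SY" using YB unfolding defs .
  have b11: "SX + SY \<le> 2 * (\<epsilon> * ?ip c c)" using CC unfolding defs .
  show ?thesis unfolding split1 split2 E_def[symmetric] st1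
    by (rule final_comb[OF b1 b2 b3 b4 b5 b6 b7 b8 b9 b10 b11 fin])
qed


lemma gronwall:
  fixes E D :: "real \<Rightarrow> real"
  assumes cont: "continuous_on {0..} E" and der: "\<forall>t>0. (E has_real_derivative D t) (at t)"
    and le: "\<forall>t>0. D t \<le> c * E t" and t: "t \<ge> 0"
  shows "E t \<le> exp (c * t) * E 0"
proof (cases "t = 0")
  case True then show ?thesis by simp
next
  case False
  then have tp: "t > 0" using t by simp
  define f where "f = (\<lambda>s. exp (- c * s) * E s)"
  have fd: "(f has_real_derivative exp (- c * s) * (D s - c * E s)) (at s)" if "s > 0" for s
  proof -
    have "(f has_real_derivative (exp (- c * s) * (- c)) * E s + exp (- c * s) * D s) (at s)"
    proof -
      have de: "((\<lambda>s. exp (- c * s)) has_real_derivative exp (- c * s) * (- c)) (at s)"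
        by (auto intro!: derivative_eq_intros)
      show ?thesis unfolding f_def by (rule DERIV_cong[OF DERIV_mult'[OF de der[rule_format, OF that]]]) (simp add: algebra_simps)
    qed
    then show ?thesis by (rule DERIV_cong) (simp add: algebra_simps)
  qed
  have fc: "continuous_on {0..t} f"
    unfolding f_def
    by (intro continuous_intros continuous_on_subset[OF cont]) auto
  have "\<exists>l z. 0 < z \<and> z < t \<and> DERIV f z :> l \<and> f t - f 0 = (t - 0) * l"
    by (rule MVT[OF tp fc]) (use fd in \<open>auto simp: real_differentiable_def\<close>)
  then obtain l z where z: "0 < z" "z < t" and dz: "DERIV f z :> l" and eq: "f t - f 0 = (t - 0) * l" by blast
  have "l = exp (- c * z) * (D z - c * E z)" using DERIV_unique[OF dz fd[OF z(1)]] .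
  moreover have "D z - c * E z \<le> 0" using le z by auto
  ultimately have "l \<le> 0" by (simp add: mult_nonneg_nonpos)
  then have "t * l \<le> 0" using tp by (simp add: mult_nonneg_nonpos)
  then have "f t \<le> f 0" using eq by simp
  then have "exp (- c * t) * E t \<le> E 0" unfolding f_def by simp
  then have "exp (c * t) * (exp (- c * t) * E t) \<le> exp (c * t) * E 0" by (rule mult_left_mono) simp_all
  moreover have "exp (c * t) * (exp (- c * t) * E t) = E t"
    by (simp add: mult.assoc[symmetric] exp_add[symmetric])
  ultimately show ?thesis by linarith
qed

lemma gronwall2:
  fixes E :: "real \<Rightarrow> real"
  assumes cont: "continuous_on {0..} E"
    and der: "\<forall>t>0. \<exists>d. (E has_real_derivative d) (at t) \<and> d \<le> c * E t" and t: "t \<ge> 0"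
  shows "E t \<le> exp (c * t) * E 0"
proof -
  define D where "D = (\<lambda>t. SOME d. (E has_real_derivative d) (at t) \<and> d \<le> c * E t)"
  have "\<forall>t>0. (E has_real_derivative D t) (at t) \<and> D t \<le> c * E t"
    unfolding D_def using der by (metis (mono_tags, lifting) someI_ex)
  then show ?thesis using gronwall[OF cont _ _ t, of D] by blast
qed

lemma sum_sq_deriv:
  fixes V :: "real \<Rightarrow> nat \<Rightarrow> nat \<Rightarrow> real"
  assumes "\<forall>i<N. \<forall>j<M. ((\<lambda>s. V s i j) has_real_derivative r i j) (at t)"
  shows "((\<lambda>s. \<Sum>i<N. \<Sum>j<M. w i j * V s i j * V s i j) has_real_derivative
           (\<Sum>i<N. \<Sum>j<M. 2 * (w i j * V t i j * r i j))) (at t)"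
proof (intro DERIV_sum)
  fix i j assume i: "i \<in> {..<N}" and j: "j \<in> {..<M}"
  have d: "((\<lambda>s. V s i j) has_real_derivative r i j) (at t)" using assms i j by auto
  show "((\<lambda>s. w i j * V s i j * V s i j) has_real_derivative 2 * (w i j * V t i j * r i j)) (at t)"
    by (rule DERIV_cong[OF DERIV_mult[OF DERIV_cmult[OF d] d]]) (simp add: algebra_simps)
qed

lemma normsq_deriv:
  assumes A: "\<forall>i<N. \<forall>j<M. ((\<lambda>s. V1 s i j) has_real_derivative r1 i j) (at t)
          \<and> ((\<lambda>s. V2 s i j) has_real_derivative r2 i j) (at t)"
  shows "((\<lambda>s. normsqP N M hx hy px py (V1 s) (V2 s)) has_real_derivative
     2 * ipP N M hx hy px py (V1 t) r1 + 2 * ipP N M hx hy px py (V2 t) r2) (at t)"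
proof -
  have assms: "\<forall>i<N. \<forall>j<M. ((\<lambda>s. V1 s i j) has_real_derivative r1 i j) (at t)"
      "\<forall>i<N. \<forall>j<M. ((\<lambda>s. V2 s i j) has_real_derivative r2 i j) (at t)" using A by auto
  have e: "normsqP N M hx hy px py (V1 s) (V2 s) = (\<Sum>i<N. \<Sum>j<M. (hx * px i * hy * py j) * V1 s i j * V1 s i j)
      + (\<Sum>i<N. \<Sum>j<M. (hx * px i * hy * py j) * V2 s i j * V2 s i j)" for s
    unfolding normsqP_def ipP_def ..
  have v: "2 * ipP N M hx hy px py W r = (\<Sum>i<N. \<Sum>j<M. 2 * ((hx * px i * hy * py j) * W i j * r i j))" for W r
    unfolding ipP_def by (simp add: sum_distrib_left)
  show ?thesis unfolding e v
    by (rule DERIV_add[OF sum_sq_deriv[OF assms(1)] sum_sq_deriv[OF assms(2)]])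
qed

lemma normsq_cont:
  assumes "\<forall>i<N. \<forall>j<M. continuous_on {0..} (\<lambda>t. V1 t i j) \<and> continuous_on {0..} (\<lambda>t. V2 t i j)"
  shows "continuous_on {0..} (\<lambda>s. normsqP N M hx hy px py (V1 s) (V2 s))"
  unfolding normsqP_def ipP_def
  by (intro continuous_intros) (use assms in auto)

theorem theorem3p4:
  fixes u1 u2 :: "real \<times> real \<Rightarrow> real" and \<epsilon> C0 K :: real
  assumes u1_smooth: "smooth_on_closed ({0..1} \<times> {0..1}) u1"
      and u2_smooth: "smooth_on_closed ({0..1} \<times> {0..1}) u2"
      and eps_pos: "\<epsilon> > 0"
  shows "\<exists>c::real. \<forall>(N::nat) (M::nat) (hx::real) (hy::real) (px::nat \<Rightarrow> real) (py::nat \<Rightarrow> real)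
           (Qx::nat \<Rightarrow> nat \<Rightarrow> real) (Qy::nat \<Rightarrow> nat \<Rightarrow> real) (p::real)
           (sL1::nat \<Rightarrow> nat \<Rightarrow> real) (sR1::nat \<Rightarrow> nat \<Rightarrow> real) (sD1::nat \<Rightarrow> nat \<Rightarrow> real) (sU1::nat \<Rightarrow> nat \<Rightarrow> real)
           (sL2::nat \<Rightarrow> nat \<Rightarrow> real) (sR2::nat \<Rightarrow> nat \<Rightarrow> real) (sD2::nat \<Rightarrow> nat \<Rightarrow> real) (sU2::nat \<Rightarrow> nat \<Rightarrow> real)
           (tL::real) (tR::real) (tD::real) (tU::real)
           (V1::real \<Rightarrow> nat \<Rightarrow> nat \<Rightarrow> real) (V2::real \<Rightarrow> nat \<Rightarrow> nat \<Rightarrow> real).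
     let Dx = sbpD hx px Qx; Dy = sbpD hy py Qy;
         g1 = (\<lambda>i j. u1 (real i * hx, real j * hy));
         g2 = (\<lambda>i j. u2 (real i * hx, real j * hy));
         SL = (\<lambda>i j. sL1 i j + \<epsilon> * sL2 i j); SR = (\<lambda>i j. sR1 i j + \<epsilon> * sR2 i j);
         SD = (\<lambda>i j. sD1 i j + \<epsilon> * sD2 i j); SU = (\<lambda>i j. sU1 i j + \<epsilon> * sU2 i j);
         B = penB N M hx hy px py SL SR SD SU;
         rhs1 = (\<lambda>W1 W2 i j.
             - g1 i j * dX N Dx W1 i j - g2 i j * dY M Dy W1 i j
             + (- dY M Dy g2 i j * W1 i j + dY M Dy g1 i j * W2 i j)
             - \<epsilon> * (- dY M Dy (dY M Dy W1) i j + dX N Dx (dY M Dy W2) i j)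
             + B W1 i j);
         rhs2 = (\<lambda>W1 W2 i j.
             - g1 i j * dX N Dx W2 i j - g2 i j * dY M Dy W2 i j
             + (dX N Dx g2 i j * W1 i j - dX N Dx g1 i j * W2 i j)
             - \<epsilon> * (dX N Dx (dY M Dy W1) i j - dX N Dx (dX N Dx W2) i j)
             + B W2 i j)
     in
     ( \<comment> \<open>grid\<close>
       hx > 0 \<and> hy > 0 \<and> (real N - 1) * hx = 1 \<and> (real M - 1) * hy = 1
       \<comment> \<open>SBP operators\<close>
     \<and> (\<forall>i<N. px i > 0) \<and> (\<forall>j<M. py j > 0)
     \<and> sbp_Q N Qx \<and> sbp_Q M Qy
     \<and> p = px 0 \<and> p = px (N - 1) \<and> p = py 0 \<and> p = py (M - 1)
     \<and> commutator_bound N hx px Qx C0 \<and> commutator_bound M hy py Qy C0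
       \<comment> \<open>bounds on the derivative approximations of u1, u2\<close>
     \<and> (\<forall>i<N. \<forall>j<M. \<bar>dX N Dx g1 i j\<bar> \<le> K \<and> \<bar>dX N Dx g2 i j\<bar> \<le> K
                   \<and> \<bar>dY M Dy g1 i j\<bar> \<le> K \<and> \<bar>dY M Dy g2 i j\<bar> \<le> K)
       \<comment> \<open>penalty parameters Sigma'\<close>
     \<and> (\<forall>j<M. sR1 (N - 1) j \<le> neg_part (u1 (1, real j * hy)) / 2)
     \<and> (\<forall>j<M. sL1 0 j \<le> - pos_part (u1 (0, real j * hy)) / 2)
     \<and> (\<forall>i<N. sU1 i (M - 1) \<le> neg_part (u2 (real i * hx, 1)) / 2)
     \<and> (\<forall>i<N. sD1 i 0 \<le> - pos_part (u2 (real i * hx, 0)) / 2)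
     \<and> (\<forall>i<N. \<forall>j<M. i \<noteq> N - 1 \<longrightarrow> sR1 i j = 0) \<and> (\<forall>i<N. \<forall>j<M. i \<noteq> 0 \<longrightarrow> sL1 i j = 0)
     \<and> (\<forall>i<N. \<forall>j<M. j \<noteq> M - 1 \<longrightarrow> sU1 i j = 0) \<and> (\<forall>i<N. \<forall>j<M. j \<noteq> 0 \<longrightarrow> sD1 i j = 0)
       \<comment> \<open>penalty parameters Sigma'' (constant boundary values tK)\<close>
     \<and> tR \<le> - 1 / (2 * p * hx) \<and> tL \<le> - 1 / (2 * p * hx)
     \<and> tU \<le> - 1 / (2 * p * hy) \<and> tD \<le> - 1 / (2 * p * hy)
     \<and> (\<forall>i<N. \<forall>j<M. sR2 i j = (if i = N - 1 then tR else 0))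
     \<and> (\<forall>i<N. \<forall>j<M. sL2 i j = (if i = 0 then tL else 0))
     \<and> (\<forall>i<N. \<forall>j<M. sU2 i j = (if j = M - 1 then tU else 0))
     \<and> (\<forall>i<N. \<forall>j<M. sD2 i j = (if j = 0 then tD else 0))
       \<comment> \<open>V solves the semi-discrete scheme (g = 0)\<close>
     \<and> (\<forall>i<N. \<forall>j<M. continuous_on {0..} (\<lambda>t. V1 t i j) \<and> continuous_on {0..} (\<lambda>t. V2 t i j))
     \<and> (\<forall>t>0. \<forall>i<N. \<forall>j<M.
           ((\<lambda>s. V1 s i j) has_real_derivative rhs1 (V1 t) (V2 t) i j) (at t)
         \<and> ((\<lambda>s. V2 s i j) has_real_derivative rhs2 (V1 t) (V2 t) i j) (at t)))
     \<longrightarrow> (\<forall>t\<ge>0. normsqP N M hx hy px py (V1 t) (V2 t)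
                  \<le> exp (c * t) * normsqP N M hx hy px py (V1 0) (V2 0))"
proof -
  obtain L1 where L1: "\<forall>a. (\<forall>x\<in>{0..1}. a + x *\<^sub>R (1::real, 0::real) \<in> {0..1} \<times> {0..1}) \<longrightarrow>
      smooth_on_closed {0..1} (\<lambda>x. u1 (a + x *\<^sub>R (1, 0))) \<and> \<bar>sup_deriv01 (\<lambda>x. u1 (a + x *\<^sub>R (1, 0)))\<bar> \<le> L1"
    using slice_bound[OF u1_smooth, of "(1, 0)"] by blast
  obtain L2 where L2: "\<forall>a. (\<forall>x\<in>{0..1}. a + x *\<^sub>R (0::real, 1::real) \<in> {0..1} \<times> {0..1}) \<longrightarrow>
      smooth_on_closed {0..1} (\<lambda>x. u2 (a + x *\<^sub>R (0, 1))) \<and> \<bar>sup_deriv01 (\<lambda>x. u2 (a + x *\<^sub>R (0, 1)))\<bar> \<le> L2"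
    using slice_bound[OF u2_smooth, of "(0, 1)"] by blast
  have HX0: "smooth_on_closed {0..1} (\<lambda>x. u1 (x, y)) \<and> \<bar>sup_deriv01 (\<lambda>x. u1 (x, y))\<bar> \<le> L1"
    if y: "y \<in> {0..1}" for y
  proof -
    have e: "(\<lambda>x. u1 ((0, y) + x *\<^sub>R (1, 0))) = (\<lambda>x. u1 (x, y))" by simp
    have "\<forall>x\<in>{0..1}. (0, y) + x *\<^sub>R (1::real, 0::real) \<in> {0..1} \<times> {0..1}" using y by simp
    then show ?thesis using L1[rule_format, of "(0, y)"] unfolding e by blast
  qed
  have HY0: "smooth_on_closed {0..1} (\<lambda>y. u2 (x, y)) \<and> \<bar>sup_deriv01 (\<lambda>y. u2 (x, y))\<bar> \<le> L2"
    if x: "x \<in> {0..1}" for x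
  proof -
    have e: "(\<lambda>y. u2 ((x, 0) + y *\<^sub>R (0, 1))) = (\<lambda>y. u2 (x, y))" by simp
    have "\<forall>y\<in>{0..1}. (x, 0) + y *\<^sub>R (0::real, 1::real) \<in> {0..1} \<times> {0..1}" using x by simp
    then show ?thesis using L2[rule_format, of "(x, 0)"] unfolding e by blast
  qed
  show ?thesis
  proof (rule exI[of _ "\<bar>C0\<bar> * (L1 + L2) + 4 * \<bar>K\<bar>"], intro allI, unfold Let_def, intro impI, elim conjE, goal_cases)
    case (1 N M hx hy px py Qx Qy p sL1 sR1 sD1 sU1 sL2 sR2 sD2 sU2 tL tR tD tU V1 V2)
    note prems = 1
    show ?case
    proof (intro allI impI)
      fix t :: real assume t0: "t \<ge> 0"
      have hx: "hx > 0" and hy: "hy > 0" using prems(1,2) .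
      have HX: "\<forall>j<M. smooth_on_closed {0..1} (\<lambda>x. u1 (x, real j * hy)) \<and> \<bar>sup_deriv01 (\<lambda>x. u1 (x, real j * hy))\<bar> \<le> L1"
      proof (intro allI impI)
        fix j assume j: "j < M"
        have "real j \<le> real M - 1" using j by (simp add: of_nat_less_iff[symmetric] del: of_nat_less_iff)
        then have "real j * hy \<le> (real M - 1) * hy" using hy by (intro mult_right_mono) auto
        then have "real j * hy \<in> {0..1}" using prems(4) hy by simp
        then show "smooth_on_closed {0..1} (\<lambda>x. u1 (x, real j * hy)) \<and> \<bar>sup_deriv01 (\<lambda>x. u1 (x, real j * hy))\<bar> \<le> L1"
          by (rule HX0)
      qed
      have HY: "\<forall>i<N. smooth_on_closed {0..1} (\<lambda>y. u2 (real i * hx, y)) \<and> \<bar>sup_deriv01 (\<lambda>y. u2 (real i * hx, y))\<bar> \<le> L2"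
      proof (intro allI impI)
        fix i assume i: "i < N"
        have "real i \<le> real N - 1" using i by (simp add: of_nat_less_iff[symmetric] del: of_nat_less_iff)
        then have "real i * hx \<le> (real N - 1) * hx" using hx by (intro mult_right_mono) auto
        then have "real i * hx \<in> {0..1}" using prems(3) hx by simp
        then show "smooth_on_closed {0..1} (\<lambda>y. u2 (real i * hx, y)) \<and> \<bar>sup_deriv01 (\<lambda>y. u2 (real i * hx, y))\<bar> \<le> L2"
          by (rule HY0)
      qed
      have der: "\<forall>s>0. \<exists>d. ((\<lambda>s. normsqP N M hx hy px py (V1 s) (V2 s)) has_real_derivative d) (at s)
                  \<and> d \<le> (\<bar>C0\<bar> * (L1 + L2) + 4 * \<bar>K\<bar>) * normsqP N M hx hy px py (V1 s) (V2 s)"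
      proof (intro allI impI)
        fix s :: real assume s: "s > 0"
        show "\<exists>d. ((\<lambda>s. normsqP N M hx hy px py (V1 s) (V2 s)) has_real_derivative d) (at s)
                  \<and> d \<le> (\<bar>C0\<bar> * (L1 + L2) + 4 * \<bar>K\<bar>) * normsqP N M hx hy px py (V1 s) (V2 s)"
          apply (intro exI conjI)
           apply (rule normsq_deriv[OF mp[OF spec[OF prems(33)] s]])
          apply (rule energy[where ?u1.0=u1 and ?u2.0=u2 and ?\<epsilon>=\<epsilon> and ?hx=hx and ?hy=hy and ?N=N and ?M=M and ?px=px and ?py=py and ?Qx=Qx and ?Qy=Qy and ?p=p and ?C0.0=C0 and ?K=K and ?L1.0=L1 and ?L2.0=L2 and ?sR1.0=sR1 and ?sL1.0=sL1 and ?sU1.0=sU1 and ?sD1.0=sD1 and ?sR2.0=sR2 and ?sL2.0=sL2 and ?sU2.0=sU2 and ?sD2.0=sD2 and ?tR=tR and ?tL=tL and ?tU=tU and ?tD=tD, OF eps_pos prems(1-14) refl refl refl refl prems(15-19) prems(24-31) refl refl refl refl refl HX HY])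
          done
      qed
      show "normsqP N M hx hy px py (V1 t) (V2 t) \<le> exp ((\<bar>C0\<bar> * (L1 + L2) + 4 * \<bar>K\<bar>) * t) * normsqP N M hx hy px py (V1 0) (V2 0)"
        by (rule gronwall2[OF normsq_cont[OF prems(32)] der t0])
    qed
  qed
qed

end
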